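(* Let $0<p<1$ and let $G_n\in G(n,p)$ be independent random graphs (on $n$ vertices, each edge present independently with probability $p$). Then $(G_n)_{n\in\mathbb N}$ is almost surely FO-convergent.
   Context: For a first-order graph formula $\phi$ with free variables among $x_1,\dots,x_q$ and a finite graph $G$, $\langle\phi,G\rangle=|\{(v_1,\dots,v_q)\in V(G)^q:G\models\phi(v_1,\dots,v_q)\}|/|G|^q$. A sequence $(G_n)$ is FO-convergent if $\langle\phi,G_n\rangle$ converges for every first-order formula $\phi$. *)

theory Defs
  imports "HOL-Probability.Probability"
begin

datatype fo = FTrue | FEq nat nat | FAdj nat nat | FNeg fo | FConj fo fo | FDisj fo fo
  | FEx nat fo | FAll nat fo

fun fv :: "fo \<Rightarrow> nat set" where
  "fv FTrue = {}"
| "fv (FEq i j) = {i, j}"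
| "fv (FAdj i j) = {i, j}"
| "fv (FNeg f) = fv f"
| "fv (FConj f g) = fv f \<union> fv g"
| "fv (FDisj f g) = fv f \<union> fv g"
| "fv (FEx x f) = fv f - {x}"
| "fv (FAll x f) = fv f - {x}"

text \<open>A finite graph on vertex set {0..<n} is given by n and a set E of 2-element edges.\<close>
fun sat :: "nat \<Rightarrow> nat set set \<Rightarrow> (nat \<Rightarrow> nat) \<Rightarrow> fo \<Rightarrow> bool" where
  "sat n E v FTrue = True"
| "sat n E v (FEq i j) = (v i = v j)"
| "sat n E v (FAdj i j) = ({v i, v j} \<in> E)"
| "sat n E v (FNeg f) = (\<not> sat n E v f)"
| "sat n E v (FConj f g) = (sat n E v f \<and> sat n E v g)"
| "sat n E v (FDisj f g) = (sat n E v f \<or> sat n E v g)"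
| "sat n E v (FEx x f) = (\<exists>a<n. sat n E (v(x := a)) f)"
| "sat n E v (FAll x f) = (\<forall>a<n. sat n E (v(x := a)) f)"

definition nvars :: "fo \<Rightarrow> nat" where
  "nvars f = (if fv f = {} then 0 else Suc (Max (fv f)))"

definition stone :: "fo \<Rightarrow> nat \<Rightarrow> nat set set \<Rightarrow> real" where
  "stone f n E = real (card {v \<in> Pi\<^sub>E {..<nvars f} (\<lambda>_. {..<n}). sat n E v f})
                 / real n ^ nvars f"

definition FO_convergent :: "(nat \<Rightarrow> nat set set) \<Rightarrow> bool" where
  "FO_convergent G \<longleftrightarrow> (\<forall>f. convergent (\<lambda>n. stone f n (G n)))"

definition pairs :: "nat \<Rightarrow> nat set set" where
  "pairs n = {{i, j} | i j. i < j \<and> j < n}"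

definition gnp :: "nat \<Rightarrow> real \<Rightarrow> nat set set pmf" where
  "gnp n p = map_pmf (\<lambda>b. {e \<in> pairs n. b e}) (Pi_pmf (pairs n) False (\<lambda>_. bernoulli_pmf p))"

end

theory Submission
  imports Defs
begin

fun qd :: "fo \<Rightarrow> nat" where
  "qd FTrue = 0"
| "qd (FEq i j) = 0"
| "qd (FAdj i j) = 0"
| "qd (FNeg f) = qd f"
| "qd (FConj f g) = max (qd f) (qd g)"
| "qd (FDisj f g) = max (qd f) (qd g)"
| "qd (FEx x f) = Suc (qd f)"
| "qd (FAll x f) = Suc (qd f)"

lemma finite_fv: "finite (fv f)"
  by (induction f) auto

lemma fv_nvars: "fv f \<subseteq> {..<nvars f}"
  unfolding nvars_def using finite_fv[of f]
  by (auto simp: less_Suc_eq_le)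

definition ext_set :: "nat \<Rightarrow> nat \<Rightarrow> nat set set \<Rightarrow> bool" where
  "ext_set k n E \<longleftrightarrow> (\<forall>A S. A \<subseteq> {..<n} \<longrightarrow> card A \<le> k \<longrightarrow> S \<subseteq> A \<longrightarrow>
       (\<exists>z<n. z \<notin> A \<and> (\<forall>y\<in>A. {z, y} \<in> E \<longleftrightarrow> y \<in> S)))"

definition loopless :: "nat set set \<Rightarrow> bool" where
  "loopless E \<longleftrightarrow> (\<forall>a. {a} \<notin> E)"

definition piso :: "nat set \<Rightarrow> nat set set \<Rightarrow> (nat \<Rightarrow> nat) \<Rightarrow> nat set set \<Rightarrow> (nat \<Rightarrow> nat) \<Rightarrow> bool" where
  "piso X E v E' v' \<longleftrightarrow> (\<forall>x\<in>X. \<forall>y\<in>X. (v x = v y \<longleftrightarrow> v' x = v' y) \<and> ({v x, v y} \<in> E \<longleftrightarrow> {v' x, v' y} \<in> E'))"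

lemma piso_sym: "piso X E v E' v' \<Longrightarrow> piso X E' v' E v"
  unfolding piso_def by blast

lemma piso_comp:
  assumes "piso X E v E' v'" "\<And>u. u \<in> Y \<Longrightarrow> r u \<in> X"
  shows "piso Y E (v \<circ> r) E' (v' \<circ> r)"
  using assms unfolding piso_def by simp

lemma extend:
  assumes iso: "piso X E v E' v'" and ext: "ext_set k n' E'"
    and fin: "finite X" and cardX: "card X \<le> k"
    and rng: "v' ` X \<subseteq> {..<n'}"
    and ll: "loopless E" "loopless E'"
  shows "\<exists>a'<n'. piso (insert x X) E (v(x := a)) E' (v'(x := a'))"
proof -
  let ?Y = "X - {x}"
  show ?thesis
  proof (cases "a \<in> v ` ?Y")
    case True
    then obtain y where y: "y \<in> ?Y" "a = v y" by auto
    have "v' y < n'" using rng y by auto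
    moreover have "piso (insert x X) E (v(x := a)) E' (v'(x := v' y))"
    proof -
      define r where "r u = (if u = x then y else u)" for u
      have "piso (insert x X) E (v \<circ> r) E' (v' \<circ> r)"
        by (rule piso_comp[OF iso]) (use y in \<open>auto simp: r_def\<close>)
      moreover have "v \<circ> r = v(x := a)" "v' \<circ> r = v'(x := v' y)"
        using y by (auto simp: r_def fun_eq_iff)
      ultimately show ?thesis by simp
    qed
    ultimately show ?thesis by blast
  next
    case False
    define A where "A = v' ` ?Y"
    define S where "S = v' ` {y\<in>?Y. {a, v y} \<in> E}"
    have "card A \<le> k" unfolding A_def
      using card_image_le[of ?Y v'] fin card_mono[of X ?Y] cardX by fastforce
    moreover have "A \<subseteq> {..<n'}" using rng unfolding A_def by auto
    moreover have "S \<subseteq> A" unfolding S_def A_def by auto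
    ultimately obtain z where z: "z < n'" "z \<notin> A" "\<forall>y\<in>A. {z, y} \<in> E' \<longleftrightarrow> y \<in> S"
      using ext[unfolded ext_set_def, rule_format, of A S] by blast
    have "piso (insert x X) E (v(x := a)) E' (v'(x := z))"
      unfolding piso_def
    proof (intro ballI conjI)
      fix u w assume u: "u \<in> insert x X" and w: "w \<in> insert x X"
      have key: "({a, v y} \<in> E) = ({z, v' y} \<in> E')" if "y \<in> ?Y" for y
      proof -
        have "({z, v' y} \<in> E') = (v' y \<in> S)" using z(3) that unfolding A_def by auto
        also have "\<dots> = ({a, v y} \<in> E)"
        proof
          assume "v' y \<in> S"
          then obtain y' where "y' \<in> ?Y" "{a, v y'} \<in> E" "v' y = v' y'" unfolding S_def by auto
          moreover have "v y = v y'" using iso that \<open>y' \<in> ?Y\<close> \<open>v' y = v' y'\<close> unfolding piso_def by blast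
          ultimately show "{a, v y} \<in> E" by simp
        qed (use that in \<open>auto simp: S_def\<close>)
        finally show ?thesis by simp
      qed
      have neq: "a \<noteq> v y" "z \<noteq> v' y" if "y \<in> ?Y" for y
        using False z(2) that unfolding A_def by auto
      show "((v(x := a)) u = (v(x := a)) w) = ((v'(x := z)) u = (v'(x := z)) w)"
      proof (cases "u = x"; cases "w = x")
        assume "u \<noteq> x" "w \<noteq> x" then show ?thesis using u w iso unfolding piso_def by auto
      next
        assume "u = x" "w \<noteq> x" then show ?thesis using w neq[of w] by auto
      next
        assume "u \<noteq> x" "w = x" then show ?thesis using u neq[of u] by auto
      qed auto
      show "({(v(x := a)) u, (v(x := a)) w} \<in> E) = ({(v'(x := z)) u, (v'(x := z)) w} \<in> E')"
      proof (cases "u = x"; cases "w = x")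
        assume "u \<noteq> x" "w \<noteq> x" then show ?thesis using u w iso unfolding piso_def by auto
      next
        assume "u = x" "w \<noteq> x" then show ?thesis using w key[of w] by auto
      next
        assume "u \<noteq> x" "w = x" then show ?thesis using u key[of u] by (auto simp: insert_commute)
      next
        assume "u = x" "w = x" then show ?thesis using ll unfolding loopless_def by auto
      qed
    qed
    with z(1) show ?thesis by blast
  qed
qed

lemma sat_agree:
  assumes "ext_set k n E" "ext_set k n' E'" "loopless E" "loopless E'"
  shows "piso X E v E' v' \<Longrightarrow> finite X \<Longrightarrow> v ` X \<subseteq> {..<n} \<Longrightarrow> v' ` X \<subseteq> {..<n'}
    \<Longrightarrow> fv f \<subseteq> X \<Longrightarrow> card X + qd f \<le> k \<Longrightarrow> sat n E v f = sat n' E' v' f"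
proof (induction f arbitrary: X v v')
  case (FEq i j) then show ?case unfolding piso_def by auto
next
  case (FAdj i j) then show ?case unfolding piso_def by auto
next
  case (FNeg f) then show ?case by auto
next
  case (FConj f g) then show ?case by auto
next
  case (FDisj f g) then show ?case by auto
next
  case (FEx x f)
  have c0: "card X + Suc (qd f) \<le> k" using FEx.prems(6) by simp
  have c1: "card (insert x X) \<le> Suc (card X)" using FEx.prems(2) by (simp add: card_insert_if)
  have ck: "card X \<le> k" "card (insert x X) + qd f \<le> k" using c0 c1 by linarith+
  have IH: "sat n E (v(x:=a)) f = sat n' E' (v'(x:=a')) f"
    if "piso (insert x X) E (v(x := a)) E' (v'(x := a'))" "a < n" "a' < n'" for a a'
  proof (rule FEx.IH[OF that(1)])
    show "finite (insert x X)" using FEx.prems(2) by simp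
    show "(v(x := a)) ` insert x X \<subseteq> {..<n}" using FEx.prems(3) that(2) by auto
    show "(v'(x := a')) ` insert x X \<subseteq> {..<n'}" using FEx.prems(4) that(3) by auto
    show "fv f \<subseteq> insert x X" using FEx.prems(5) by auto
    show "card (insert x X) + qd f \<le> k" by (rule ck(2))
  qed
  show ?case
  proof
    assume "sat n E v (FEx x f)"
    then obtain a where a: "a < n" "sat n E (v(x:=a)) f" by auto
    obtain a' where a': "a' < n'" "piso (insert x X) E (v(x := a)) E' (v'(x := a'))"
      using extend[OF FEx.prems(1) assms(2) FEx.prems(2) ck(1) FEx.prems(4) assms(3,4)] by blast
    have "sat n' E' (v'(x:=a')) f" using IH[OF a'(2) a(1) a'(1)] a(2) by simp
    then show "sat n' E' v' (FEx x f)" using a'(1) by (simp only: sat.simps) blast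
  next
    assume "sat n' E' v' (FEx x f)"
    then obtain a' where a: "a' < n'" "sat n' E' (v'(x:=a')) f" by auto
    obtain a where a2: "a < n" "piso (insert x X) E' (v'(x := a')) E (v(x := a))"
      using extend[OF piso_sym[OF FEx.prems(1)] assms(1) FEx.prems(2) ck(1) FEx.prems(3) assms(4,3)] by blast
    have "sat n E (v(x:=a)) f" using IH[OF piso_sym[OF a2(2)] a2(1) a(1)] a(2) by simp
    then show "sat n E v (FEx x f)" using a2(1) by (simp only: sat.simps) blast
  qed
next
  case (FAll x f)
  have c0: "card X + Suc (qd f) \<le> k" using FAll.prems(6) by simp
  have c1: "card (insert x X) \<le> Suc (card X)" using FAll.prems(2) by (simp add: card_insert_if)
  have ck: "card X \<le> k" "card (insert x X) + qd f \<le> k" using c0 c1 by linarith+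
  have IH: "sat n E (v(x:=a)) f = sat n' E' (v'(x:=a')) f"
    if "piso (insert x X) E (v(x := a)) E' (v'(x := a'))" "a < n" "a' < n'" for a a'
  proof (rule FAll.IH[OF that(1)])
    show "finite (insert x X)" using FAll.prems(2) by simp
    show "(v(x := a)) ` insert x X \<subseteq> {..<n}" using FAll.prems(3) that(2) by auto
    show "(v'(x := a')) ` insert x X \<subseteq> {..<n'}" using FAll.prems(4) that(3) by auto
    show "fv f \<subseteq> insert x X" using FAll.prems(5) by auto
    show "card (insert x X) + qd f \<le> k" by (rule ck(2))
  qed
  show ?case
  proof
    assume A: "sat n E v (FAll x f)"
    show "sat n' E' v' (FAll x f)"
    proof (simp, intro allI impI)
      fix a' assume a': "a' < n'"
      obtain a where a2: "a < n" "piso (insert x X) E' (v'(x := a')) E (v(x := a))"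
        using extend[OF piso_sym[OF FAll.prems(1)] assms(1) FAll.prems(2) ck(1) FAll.prems(3) assms(4,3)] by blast
      have "sat n E (v(x:=a)) f" using A a2(1) by simp
      then show "sat n' E' (v'(x := a')) f" using IH[OF piso_sym[OF a2(2)] a2(1) a'] by simp
    qed
  next
    assume A: "sat n' E' v' (FAll x f)"
    show "sat n E v (FAll x f)"
    proof (simp, intro allI impI)
      fix a assume a: "a < n"
      obtain a' where a2: "a' < n'" "piso (insert x X) E (v(x := a)) E' (v'(x := a'))"
        using extend[OF FAll.prems(1) assms(2) FAll.prems(2) ck(1) FAll.prems(4) assms(3,4)] by blast
      have "sat n' E' (v'(x:=a')) f" using A a2(1) by simp
      then show "sat n E (v(x := a)) f" using IH[OF a2(2) a a2(1)] by simp
    qed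
  qed
qed simp


definition ty :: "nat \<Rightarrow> nat set set \<Rightarrow> (nat \<Rightarrow> nat) \<Rightarrow> (nat \<times> nat \<Rightarrow> bool \<times> bool)" where
  "ty q E v = restrict (\<lambda>(i,j). (v i = v j, {v i, v j} \<in> E)) ({..<q} \<times> {..<q})"

definition Tys :: "nat \<Rightarrow> (nat \<times> nat \<Rightarrow> bool \<times> bool) set" where
  "Tys q = PiE ({..<q} \<times> {..<q}) (\<lambda>_. UNIV)"

definition D :: "(nat \<times> nat \<Rightarrow> bool \<times> bool) \<Rightarrow> nat \<Rightarrow> nat \<Rightarrow> nat set set \<Rightarrow> real" where
  "D \<tau> q n E = real (card {v \<in> Pi\<^sub>E {..<q} (\<lambda>_. {..<n}). ty q E v = \<tau>}) / real n ^ q"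

lemma finite_Tys: "finite (Tys q)"
  unfolding Tys_def by (intro finite_PiE) auto

lemma ty_in_Tys: "ty q E v \<in> Tys q"
  unfolding ty_def Tys_def by auto

lemma piso_of_ty:
  assumes "ty q E v = ty q E' v'"
  shows "piso {..<q} E v E' v'"
  unfolding piso_def
proof (intro ballI)
  fix x y assume "x \<in> {..<q}" "y \<in> {..<q}"
  then have "ty q E v (x,y) = ty q E' v' (x,y)" using assms by simp
  with \<open>x \<in> {..<q}\<close> \<open>y \<in> {..<q}\<close> show "(v x = v y \<longleftrightarrow> v' x = v' y) \<and> ({v x, v y} \<in> E \<longleftrightarrow> {v' x, v' y} \<in> E')"
    unfolding ty_def by auto
qed

definition good :: "fo \<Rightarrow> (nat \<times> nat \<Rightarrow> bool \<times> bool) \<Rightarrow> bool" where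
  "good f \<tau> \<longleftrightarrow> (\<exists>n E v. ext_set (nvars f + qd f) n E \<and> loopless E \<and>
      v \<in> Pi\<^sub>E {..<nvars f} (\<lambda>_. {..<n}) \<and> ty (nvars f) E v = \<tau> \<and> sat n E v f)"

lemma sat_iff_good:
  assumes "ext_set (nvars f + qd f) n E" "loopless E" "v \<in> Pi\<^sub>E {..<nvars f} (\<lambda>_. {..<n})"
  shows "sat n E v f \<longleftrightarrow> good f (ty (nvars f) E v)"
proof
  assume "sat n E v f" then show "good f (ty (nvars f) E v)"
    unfolding good_def using assms by blast
next
  assume "good f (ty (nvars f) E v)"
  then obtain n' E' v' where H: "ext_set (nvars f + qd f) n' E'" "loopless E'"
      "v' \<in> Pi\<^sub>E {..<nvars f} (\<lambda>_. {..<n'})" "ty (nvars f) E' v' = ty (nvars f) E v" "sat n' E' v' f"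
    unfolding good_def by blast
  have "sat n' E' v' f = sat n E v f"
  proof (rule sat_agree[OF H(1) assms(1) H(2) assms(2) piso_of_ty[OF H(4)]])
    show "finite {..<nvars f}" by simp
    show "v' ` {..<nvars f} \<subseteq> {..<n'}" using H(3) by auto
    show "v ` {..<nvars f} \<subseteq> {..<n}" using assms(3) by auto
    show "fv f \<subseteq> {..<nvars f}" by (rule fv_nvars)
    show "card {..<nvars f} + qd f \<le> nvars f + qd f" by simp
  qed
  with H(5) show "sat n E v f" by simp
qed

lemma stone_decomp:
  assumes "ext_set (nvars f + qd f) n E" "loopless E"
  shows "stone f n E = (\<Sum>\<tau>\<in>{\<tau>\<in>Tys (nvars f). good f \<tau>}. D \<tau> (nvars f) n E)"
proof -
  let ?q = "nvars f"
  let ?P = "Pi\<^sub>E {..<?q} (\<lambda>_. {..<n})"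
  let ?T = "{\<tau>\<in>Tys ?q. good f \<tau>}"
  have fP: "finite ?P" by (intro finite_PiE) auto
  have eq: "{v \<in> ?P. sat n E v f} = (\<Union>\<tau>\<in>?T. {v \<in> ?P. ty ?q E v = \<tau>})"
    using sat_iff_good[OF assms] ty_in_Tys by auto
  have "card {v \<in> ?P. sat n E v f} = (\<Sum>\<tau>\<in>?T. card {v \<in> ?P. ty ?q E v = \<tau>})"
    unfolding eq
    by (rule card_UN_disjoint) (use finite_Tys fP in auto)
  then show ?thesis
    unfolding stone_def D_def by (simp add: sum_divide_distrib)
qed

lemma FO_convergent_crit:
  assumes "\<And>n. loopless (E n)"
    and "\<And>k. eventually (\<lambda>n. ext_set k n (E n)) sequentially"
    and "\<And>q \<tau>. \<tau> \<in> Tys q \<Longrightarrow> convergent (\<lambda>n. D \<tau> q n (E n))"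
  shows "FO_convergent E"
  unfolding FO_convergent_def
proof
  fix f
  let ?T = "{\<tau>\<in>Tys (nvars f). good f \<tau>}"
  have "convergent (\<lambda>n. \<Sum>\<tau>\<in>?T. D \<tau> (nvars f) n (E n))"
    by (rule convergent_sum) (use assms(3) in auto)
  then obtain L where L: "(\<lambda>n. \<Sum>\<tau>\<in>?T. D \<tau> (nvars f) n (E n)) \<longlonglongrightarrow> L"
    unfolding convergent_def by blast
  have "eventually (\<lambda>n. stone f n (E n) = (\<Sum>\<tau>\<in>?T. D \<tau> (nvars f) n (E n))) sequentially"
    using assms(2)[of "nvars f + qd f"] by eventually_elim (rule stone_decomp[OF _ assms(1)])
  then have "(\<lambda>n. stone f n (E n)) \<longlonglongrightarrow> L"
    using L tendsto_cong by fastforce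
  then show "convergent (\<lambda>n. stone f n (E n))" unfolding convergent_def by blast
qed


lemma card_PiE_const: "card (Pi\<^sub>E {..<q} (\<lambda>_. {..<n::nat})) = n ^ q"
  by (simp add: card_PiE)

lemma card_coincide:
  assumes "i < q" "j < q" "i \<noteq> j"
  shows "card {v \<in> Pi\<^sub>E {..<q} (\<lambda>_. {..<n::nat}). v i = v j} \<le> n ^ (q - 1)"
proof -
  let ?S = "{v \<in> Pi\<^sub>E {..<q} (\<lambda>_. {..<n::nat}). v i = v j}"
  let ?R = "{..<q} - {j}"
  have "inj_on (\<lambda>v. restrict v ?R) ?S"
  proof (rule inj_onI)
    fix v w assume v: "v \<in> ?S" and w: "w \<in> ?S" and eq: "restrict v ?R = restrict w ?R"
    show "v = w"
    proof (rule PiE_ext)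
      show "v \<in> Pi\<^sub>E {..<q} (\<lambda>_. {..<n})" "w \<in> Pi\<^sub>E {..<q} (\<lambda>_. {..<n})" using v w by auto
      fix x assume x: "x \<in> {..<q}"
      show "v x = w x"
      proof (cases "x = j")
        case True
        have "restrict v ?R i = restrict w ?R i" using eq by simp
        then have "v i = w i" using assms by simp
        then show ?thesis using v w True by auto
      next
        case False
        then show ?thesis using x fun_cong[OF eq, of x] by (auto simp: restrict_def)
      qed
    qed
  qed
  moreover have "(\<lambda>v. restrict v ?R) ` ?S \<subseteq> Pi\<^sub>E ?R (\<lambda>_. {..<n})"
  proof (rule image_subsetI)
    fix v assume "v \<in> ?S"
    then show "restrict v ?R \<in> Pi\<^sub>E ?R (\<lambda>_. {..<n})"
      by (subst restrict_PiE_iff) (auto simp: PiE_iff)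
  qed
  ultimately have "card ?S \<le> card (Pi\<^sub>E ?R (\<lambda>_. {..<n}))"
    by (intro card_inj_on_le) (auto intro!: finite_PiE)
  also have "\<dots> = n ^ (q - 1)" using assms by (simp add: card_PiE)
  finally show ?thesis .
qed

lemma ty_eq_iff:
  assumes "\<tau> \<in> Tys q"
  shows "ty q E v = \<tau> \<longleftrightarrow> (\<forall>i<q. \<forall>j<q. \<tau> (i,j) = (v i = v j, {v i, v j} \<in> E))"
proof
  assume "ty q E v = \<tau>" then show "\<forall>i<q. \<forall>j<q. \<tau> (i,j) = (v i = v j, {v i, v j} \<in> E)"
    unfolding ty_def by auto
next
  assume H: "\<forall>i<q. \<forall>j<q. \<tau> (i,j) = (v i = v j, {v i, v j} \<in> E)"
  show "ty q E v = \<tau>"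
  proof (rule PiE_ext[OF ty_in_Tys[of q E v, unfolded Tys_def] assms[unfolded Tys_def]])
    fix x assume "x \<in> {..<q} \<times> {..<q}"
    then show "ty q E v x = \<tau> x" using H unfolding ty_def by auto
  qed
qed

definition Inj :: "nat \<Rightarrow> nat \<Rightarrow> (nat \<Rightarrow> nat) set" where
  "Inj q n = {v \<in> Pi\<^sub>E {..<q} (\<lambda>_. {..<n}). inj_on v {..<q}}"

definition Pc :: "(nat \<Rightarrow> nat \<Rightarrow> bool) \<Rightarrow> nat \<Rightarrow> nat \<Rightarrow> nat set set \<Rightarrow> real" where
  "Pc c q n E = real (card {v \<in> Inj q n. \<forall>i<q. \<forall>j<q. i < j \<longrightarrow> ({v i, v j} \<in> E \<longleftrightarrow> c i j)}) / real n ^ q"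

definition goodty :: "nat \<Rightarrow> (nat \<times> nat \<Rightarrow> bool \<times> bool) \<Rightarrow> bool" where
  "goodty q \<tau> \<longleftrightarrow> (\<forall>i<q. \<tau> (i,i) = (True, False)) \<and> (\<forall>i<q. \<forall>j<q. snd (\<tau> (i,j)) = snd (\<tau> (j,i)))"

lemma D_nonneg: "D \<tau> q n E \<ge> 0" unfolding D_def by simp

lemma D_case1:
  assumes "i < q" "j < q" "i \<noteq> j" "fst (\<tau> (i,j))" "\<tau> \<in> Tys q" "n > 0"
  shows "D \<tau> q n E \<le> 1 / real n"
proof -
  have sub: "{v \<in> Pi\<^sub>E {..<q} (\<lambda>_. {..<n}). ty q E v = \<tau>} \<subseteq> {v \<in> Pi\<^sub>E {..<q} (\<lambda>_. {..<n::nat}). v i = v j}"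
  proof (intro subsetI)
    fix v assume "v \<in> {v \<in> Pi\<^sub>E {..<q} (\<lambda>_. {..<n}). ty q E v = \<tau>}"
    then have "v \<in> Pi\<^sub>E {..<q} (\<lambda>_. {..<n})" "\<tau> (i,j) = (v i = v j, {v i, v j} \<in> E)"
      using ty_eq_iff[OF assms(5)] assms(1,2) by auto
    then show "v \<in> {v \<in> Pi\<^sub>E {..<q} (\<lambda>_. {..<n::nat}). v i = v j}" using assms(4) by auto
  qed
  have "card {v \<in> Pi\<^sub>E {..<q} (\<lambda>_. {..<n}). ty q E v = \<tau>} \<le> n ^ (q - 1)"
  proof -
    have "finite {v \<in> Pi\<^sub>E {..<q} (\<lambda>_. {..<n::nat}). v i = v j}"
      by (rule finite_subset[OF _ finite_PiE[of "{..<q}" "\<lambda>_. {..<n}"]]) auto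
    then show ?thesis using card_mono[OF _ sub] card_coincide[OF assms(1-3), of n] by linarith
  qed
  then have "real (card {v \<in> Pi\<^sub>E {..<q} (\<lambda>_. {..<n}). ty q E v = \<tau>}) \<le> real (n ^ (q - 1))"
    by (rule of_nat_mono)
  then have "real (card {v \<in> Pi\<^sub>E {..<q} (\<lambda>_. {..<n}). ty q E v = \<tau>}) \<le> real n ^ (q - 1)"
    by simp
  moreover have "real n ^ q = real n * real n ^ (q - 1)" using assms(1)
    by (metis less_nat_zero_code not0_implies_Suc power_Suc diff_Suc_1)
  ultimately show ?thesis using assms(6) unfolding D_def by (simp add: field_simps)
qed

lemma D_case2:
  assumes "\<tau> \<in> Tys q" "\<not> (\<exists>i<q. \<exists>j<q. i \<noteq> j \<and> fst (\<tau> (i,j)))" "goodty q \<tau>" "loopless E"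
  shows "D \<tau> q n E = Pc (\<lambda>i j. snd (\<tau> (i,j))) q n E"
proof -
  have "{v \<in> Pi\<^sub>E {..<q} (\<lambda>_. {..<n}). ty q E v = \<tau>} =
        {v \<in> Inj q n. \<forall>i<q. \<forall>j<q. i < j \<longrightarrow> ({v i, v j} \<in> E \<longleftrightarrow> snd (\<tau> (i,j)))}"
  proof (intro set_eqI iffI)
    fix v assume "v \<in> {v \<in> Pi\<^sub>E {..<q} (\<lambda>_. {..<n}). ty q E v = \<tau>}"
    then have v: "v \<in> Pi\<^sub>E {..<q} (\<lambda>_. {..<n})" and H: "\<forall>i<q. \<forall>j<q. \<tau> (i,j) = (v i = v j, {v i, v j} \<in> E)"
      using ty_eq_iff[OF assms(1)] by auto
    have "inj_on v {..<q}"
    proof (rule inj_onI)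
      fix i j assume "i \<in> {..<q}" "j \<in> {..<q}" "v i = v j"
      then show "i = j" using H assms(2) by (metis fst_conv lessThan_iff)
    qed
    then show "v \<in> {v \<in> Inj q n. \<forall>i<q. \<forall>j<q. i < j \<longrightarrow> ({v i, v j} \<in> E \<longleftrightarrow> snd (\<tau> (i,j)))}"
    proof -
      have "\<forall>i<q. \<forall>j<q. i < j \<longrightarrow> ({v i, v j} \<in> E \<longleftrightarrow> snd (\<tau> (i,j)))" using H by simp
      then show ?thesis using v \<open>inj_on v {..<q}\<close> unfolding Inj_def by blast
    qed
  next
    fix v assume "v \<in> {v \<in> Inj q n. \<forall>i<q. \<forall>j<q. i < j \<longrightarrow> ({v i, v j} \<in> E \<longleftrightarrow> snd (\<tau> (i,j)))}"
    then have v: "v \<in> Pi\<^sub>E {..<q} (\<lambda>_. {..<n})" "inj_on v {..<q}"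
      and H: "\<forall>i<q. \<forall>j<q. i < j \<longrightarrow> ({v i, v j} \<in> E \<longleftrightarrow> snd (\<tau> (i,j)))"
      unfolding Inj_def by auto
    have "\<tau> (i,j) = (v i = v j, {v i, v j} \<in> E)" if ij: "i < q" "j < q" for i j
    proof (cases "i = j")
      case True
      then show ?thesis using assms(3,4) ij unfolding goodty_def loopless_def by auto
    next
      case False
      then have "v i \<noteq> v j" using v(2) ij by (meson inj_on_eq_iff lessThan_iff)
      moreover have "fst (\<tau> (i,j)) = False" using assms(2) ij False by auto
      moreover have "snd (\<tau> (i,j)) = ({v i, v j} \<in> E)"
      proof (cases "i < j")
        case True then show ?thesis using H ij by auto
      next
        case False
        then have "j < i" using \<open>i \<noteq> j\<close> by auto
        then have "snd (\<tau> (j,i)) = ({v j, v i} \<in> E)" using H ij by auto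
        then show ?thesis using assms(3) ij unfolding goodty_def by (auto simp: insert_commute)
      qed
      ultimately show ?thesis by (simp add: prod_eq_iff)
    qed
    then show "v \<in> {v \<in> Pi\<^sub>E {..<q} (\<lambda>_. {..<n}). ty q E v = \<tau>}"
      using v ty_eq_iff[OF assms(1)] by auto
  qed
  then show ?thesis unfolding D_def Pc_def by simp
qed

lemma D_case3:
  assumes "\<tau> \<in> Tys q" "\<not> (\<exists>i<q. \<exists>j<q. i \<noteq> j \<and> fst (\<tau> (i,j)))" "\<not> goodty q \<tau>" "loopless E"
  shows "D \<tau> q n E = 0"
proof -
  have "{v \<in> Pi\<^sub>E {..<q} (\<lambda>_. {..<n}). ty q E v = \<tau>} = {}"
  proof (intro set_eqI iffI)
    fix v assume "v \<in> {v \<in> Pi\<^sub>E {..<q} (\<lambda>_. {..<n}). ty q E v = \<tau>}"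
    then have H: "\<forall>i<q. \<forall>j<q. \<tau> (i,j) = (v i = v j, {v i, v j} \<in> E)"
      using ty_eq_iff[OF assms(1)] by auto
    have "goodty q \<tau>" unfolding goodty_def
      using H assms(4) unfolding loopless_def by (auto simp: insert_commute)
    with assms(3) show "v \<in> {}" by simp
  qed simp
  then have "card {v \<in> Pi\<^sub>E {..<q} (\<lambda>_. {..<n}). ty q E v = \<tau>} = 0" by (simp only: card.empty)
  then show ?thesis unfolding D_def by simp
qed

lemma D_convergent:
  assumes "\<tau> \<in> Tys q" "\<And>n. loopless (E n)"
    and "convergent (\<lambda>n. Pc (\<lambda>i j. snd (\<tau> (i,j))) q n (E n))"
  shows "convergent (\<lambda>n. D \<tau> q n (E n))"
proof (cases "\<exists>i<q. \<exists>j<q. i \<noteq> j \<and> fst (\<tau> (i,j))")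
  case True
  then obtain i j where ij: "i < q" "j < q" "i \<noteq> j" "fst (\<tau> (i,j))" by blast
  have "(\<lambda>n. D \<tau> q n (E n)) \<longlonglongrightarrow> 0"
  proof (rule tendsto_sandwich[of "\<lambda>_. 0" _ _ "\<lambda>n. 1 / real n"])
    show "eventually (\<lambda>n. 0 \<le> D \<tau> q n (E n)) sequentially" by (simp add: D_nonneg)
    show "eventually (\<lambda>n. D \<tau> q n (E n) \<le> 1 / real n) sequentially"
    proof -
      have "\<forall>n>0. D \<tau> q n (E n) \<le> 1 / real n" using D_case1[OF ij assms(1)] by blast
      then show ?thesis unfolding eventually_sequentially by (intro exI[of _ 1]) auto
    qed
    show "(\<lambda>n. 1 / real n) \<longlonglongrightarrow> 0" by (rule lim_1_over_n)
  qed simp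
  then show ?thesis unfolding convergent_def by blast
next
  case False
  show ?thesis
  proof (cases "goodty q \<tau>")
    case True
    then show ?thesis using D_case2[OF assms(1) False True assms(2)] assms(3) by simp
  next
    case False2: False
    then show ?thesis using D_case3[OF assms(1) False False2 assms(2)] by (simp add: convergent_const)
  qed
qed


lemma prob_pair_product:
  "measure_pmf.prob (pair_pmf M N) (A \<times> B) = measure_pmf.prob M A * measure_pmf.prob N B"
proof -
  have "measure_pmf.prob (pair_pmf M N) (A \<times> B) =
        measure_pmf.prob (pair_pmf M N) ((A \<times> B) \<inter> set_pmf (pair_pmf M N))"
    by (rule measure_Int_set_pmf[symmetric])
  also have "(A \<times> B) \<inter> set_pmf (pair_pmf M N) = (A \<inter> set_pmf M) \<times> (B \<inter> set_pmf N)"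
    by (auto simp: set_pair_pmf)
  also have "measure_pmf.prob (pair_pmf M N) \<dots> =
             measure_pmf.prob M (A \<inter> set_pmf M) * measure_pmf.prob N (B \<inter> set_pmf N)"
    by (rule measure_pmf_prob_product) (auto intro: countable_subset[OF _ countable_set_pmf])
  also have "\<dots> = measure_pmf.prob M A * measure_pmf.prob N B"
    by (simp add: measure_Int_set_pmf)
  finally show ?thesis .
qed

lemma prob_Pi_pmf_local:
  assumes "finite I" "J \<subseteq> I" "\<And>b b'. (\<And>e. e \<in> J \<Longrightarrow> b e = b' e) \<Longrightarrow> Q b = Q b'"
  shows "measure_pmf.prob (Pi_pmf I d P) {b. Q b} = measure_pmf.prob (Pi_pmf J d P) {b. Q b}"
proof -
  let ?g = "\<lambda>f x. if x \<in> J then f x else d"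
  have "Pi_pmf J d P = map_pmf ?g (Pi_pmf I d P)"
    by (rule Pi_pmf_subset[OF assms(1,2)])
  then have "measure_pmf.prob (Pi_pmf J d P) {b. Q b} = measure_pmf.prob (Pi_pmf I d P) (?g -` {b. Q b})"
    by simp
  also have "?g -` {b. Q b} = {b. Q b}"
  proof -
    have "Q (?g b) = Q b" for b by (rule assms(3)) simp
    then show ?thesis by auto
  qed
  finally show ?thesis by simp
qed

lemma prob_Pi_pmf_blocks:
  assumes "finite Z"
  shows "finite I \<Longrightarrow> (\<And>z. z \<in> Z \<Longrightarrow> K z \<subseteq> I)
    \<Longrightarrow> (\<And>z z'. z \<in> Z \<Longrightarrow> z' \<in> Z \<Longrightarrow> z \<noteq> z' \<Longrightarrow> K z \<inter> K z' = {})
    \<Longrightarrow> (\<And>z b b'. z \<in> Z \<Longrightarrow> (\<And>e. e \<in> K z \<Longrightarrow> b e = b' e) \<Longrightarrow> Q z b = Q z b')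
    \<Longrightarrow> measure_pmf.prob (Pi_pmf I d P) {b. \<forall>z\<in>Z. Q z b} = (\<Prod>z\<in>Z. measure_pmf.prob (Pi_pmf I d P) {b. Q z b})"
  using assms
proof (induction Z arbitrary: I rule: finite_induct)
  case empty
  then show ?case by simp
next
  case (insert z Z)
  let ?K = "K z" and ?L = "I - K z"
  have fK: "finite ?K" using insert.prems(1) insert.prems(2)[of z] by (simp add: finite_subset)
  have fL: "finite ?L" using insert.prems(1) by simp
  have IU: "I = ?K \<union> ?L" using insert.prems(2)[of z] by auto
  let ?h = "\<lambda>(f, g) x. if x \<in> ?K then f x else g x"
  have split: "Pi_pmf I d P = map_pmf ?h (pair_pmf (Pi_pmf ?K d P) (Pi_pmf ?L d P))"
    using Pi_pmf_union[OF fK fL, of d P] IU by simp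
  have Qz: "Q z (?h (f, g)) = Q z f" for f g
    by (rule insert.prems(4)) auto
  have QZ: "Q z' (?h (f, g)) = Q z' g" if "z' \<in> Z" for z' f g
  proof (rule insert.prems(4))
    show "z' \<in> insert z Z" using that by simp
    fix e assume "e \<in> K z'"
    moreover have "K z \<inter> K z' = {}" using insert.hyps(2) that by (intro insert.prems(3)) auto
    ultimately show "?h (f, g) e = g e" by auto
  qed
  have "measure_pmf.prob (Pi_pmf I d P) {b. \<forall>z'\<in>insert z Z. Q z' b} =
        measure_pmf.prob (pair_pmf (Pi_pmf ?K d P) (Pi_pmf ?L d P)) (?h -` {b. \<forall>z'\<in>insert z Z. Q z' b})"
    by (simp add: split)
  also have "?h -` {b. \<forall>z'\<in>insert z Z. Q z' b} = {f. Q z f} \<times> {g. \<forall>z'\<in>Z. Q z' g}"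
    using Qz QZ by auto
  also have "measure_pmf.prob (pair_pmf (Pi_pmf ?K d P) (Pi_pmf ?L d P)) \<dots> =
             measure_pmf.prob (Pi_pmf ?K d P) {f. Q z f} * measure_pmf.prob (Pi_pmf ?L d P) {g. \<forall>z'\<in>Z. Q z' g}"
    by (rule prob_pair_product)
  also have "measure_pmf.prob (Pi_pmf ?K d P) {f. Q z f} = measure_pmf.prob (Pi_pmf I d P) {f. Q z f}"
  proof (rule prob_Pi_pmf_local[symmetric])
    show "finite I" by (rule insert.prems(1))
    show "K z \<subseteq> I" using insert.prems(2)[of z] by simp
    show "Q z f = Q z b'" if "\<And>e. e \<in> K z \<Longrightarrow> f e = b' e" for f b'
      using insert.prems(4)[of z f b'] that by simp
  qed
  also have "measure_pmf.prob (Pi_pmf ?L d P) {g. \<forall>z'\<in>Z. Q z' g} =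
             (\<Prod>z'\<in>Z. measure_pmf.prob (Pi_pmf ?L d P) {b. Q z' b})"
  proof (rule insert.IH)
    show "finite ?L" by (rule fL)
    fix z' assume z': "z' \<in> Z"
    have "K z \<inter> K z' = {}" using insert.hyps(2) z' by (intro insert.prems(3)) auto
    then show "K z' \<subseteq> ?L" using insert.prems(2)[of z'] z' by auto
  next
    fix z1 z2 assume "z1 \<in> Z" "z2 \<in> Z" "z1 \<noteq> z2"
    then show "K z1 \<inter> K z2 = {}" by (intro insert.prems(3)) auto
  next
    show "Q z1 b = Q z1 b'" if "z1 \<in> Z" "\<And>e. e \<in> K z1 \<Longrightarrow> b e = b' e" for z1 b b'
      using insert.prems(4)[of z1 b b'] that by simp
  qed
  also have "(\<Prod>z'\<in>Z. measure_pmf.prob (Pi_pmf ?L d P) {b. Q z' b}) =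
             (\<Prod>z'\<in>Z. measure_pmf.prob (Pi_pmf I d P) {b. Q z' b})"
  proof (rule prod.cong[OF refl])
    fix z' assume z': "z' \<in> Z"
    have "K z \<inter> K z' = {}" using insert.hyps(2) z' by (intro insert.prems(3)) auto
    then have sub: "K z' \<subseteq> ?L" using insert.prems(2)[of z'] z' by auto
    show "measure_pmf.prob (Pi_pmf ?L d P) {b. Q z' b} = measure_pmf.prob (Pi_pmf I d P) {b. Q z' b}"
    proof (rule prob_Pi_pmf_local[symmetric])
      show "finite I" by (rule insert.prems(1))
      show "?L \<subseteq> I" by blast
      show "Q z' f = Q z' b'" if "\<And>e. e \<in> ?L \<Longrightarrow> f e = b' e" for f b'
        using insert.prems(4)[of z' f b'] that z' sub by blast
    qed
  qed
  finally show ?case using insert.hyps by simp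
qed


definition bern :: "nat \<Rightarrow> real \<Rightarrow> (nat set \<Rightarrow> bool) pmf" where
  "bern n p = Pi_pmf (pairs n) False (\<lambda>_. bernoulli_pmf p)"

definition Eb :: "nat \<Rightarrow> (nat set \<Rightarrow> bool) \<Rightarrow> nat set set" where
  "Eb n b = {e \<in> pairs n. b e}"

lemma gnp_eq: "gnp n p = map_pmf (Eb n) (bern n p)"
  unfolding gnp_def bern_def Eb_def[abs_def] by (rule refl)

lemma pairs_iff: "{x, y} \<in> pairs n \<longleftrightarrow> x \<noteq> y \<and> x < n \<and> y < n"
proof
  assume "{x, y} \<in> pairs n"
  then obtain i j where "{x, y} = {i, j}" "i < j" "j < n" unfolding pairs_def by blast
  then show "x \<noteq> y \<and> x < n \<and> y < n" by (auto simp: doubleton_eq_iff)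
next
  assume H: "x \<noteq> y \<and> x < n \<and> y < n"
  show "{x, y} \<in> pairs n"
  proof (cases "x < y")
    case True then show ?thesis using H unfolding pairs_def by blast
  next
    case False
    then have "y < x" "{x, y} = {y, x}" using H by auto
    then show ?thesis using H unfolding pairs_def by blast
  qed
qed

lemma finite_pairs: "finite (pairs n)"
proof (rule finite_subset)
  show "pairs n \<subseteq> Pow {..<n}" unfolding pairs_def by auto
qed simp

lemma loopless_sub: "E \<subseteq> pairs n \<Longrightarrow> loopless E"
  unfolding loopless_def pairs_def by (auto simp: doubleton_eq_iff)

lemma Eb_sub: "Eb n b \<subseteq> pairs n" unfolding Eb_def by auto

lemma bern_lower:
  assumes "0 < p" "p < 1" "B \<noteq> {}"
  shows "measure_pmf.prob (bernoulli_pmf p) B \<ge> min p (1 - p)"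
proof -
  obtain x where x: "x \<in> B" using assms(3) by blast
  have "measure_pmf.prob (bernoulli_pmf p) {x} \<le> measure_pmf.prob (bernoulli_pmf p) B"
    using x by (intro measure_pmf.finite_measure_mono) auto
  moreover have "measure_pmf.prob (bernoulli_pmf p) {x} = (if x then p else 1 - p)"
    using assms by (simp add: measure_pmf_single)
  ultimately show ?thesis by (cases x) auto
qed

definition ext_fun :: "nat \<Rightarrow> nat \<Rightarrow> nat set set \<Rightarrow> bool" where
  "ext_fun k n E \<longleftrightarrow> (\<forall>f\<in>Pi\<^sub>E {..<k} (\<lambda>_. {..<n}). \<forall>T\<subseteq>{..<k}.
      \<exists>z<n. z \<notin> f ` {..<k} \<and> (\<forall>i<k. {z, f i} \<in> E \<longleftrightarrow> f i \<in> f ` T))"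

definition Fail :: "nat \<Rightarrow> nat \<Rightarrow> (nat \<Rightarrow> nat) \<Rightarrow> nat set \<Rightarrow> (nat set \<Rightarrow> bool) set" where
  "Fail k n f T = {b. \<not> (\<exists>z<n. z \<notin> f ` {..<k} \<and> (\<forall>i<k. {z, f i} \<in> Eb n b \<longleftrightarrow> f i \<in> f ` T))}"

lemma prob_W_lower:
  assumes p: "0 < p" "p < 1" and A: "A \<subseteq> {..<n}" "card A \<le> k" and z: "z < n" "z \<notin> A"
  shows "measure_pmf.prob (bern n p) {b. \<forall>y\<in>A. b {z, y} = (y \<in> S)} \<ge> min p (1 - p) ^ k"
proof -
  let ?c = "min p (1 - p)"
  let ?K = "(\<lambda>y. {z, y}) ` A"
  define B where "B e = {x. \<forall>y\<in>A. e = {z, y} \<longrightarrow> x = (y \<in> S)}" for e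
  have c: "0 < ?c" "?c \<le> 1" using p by auto
  have Kp: "?K \<subseteq> pairs n" using A z by (auto simp: pairs_iff)
  have eqset: "{b. \<forall>y\<in>A. b {z, y} = (y \<in> S)} = Pi (pairs n) B"
  proof (intro set_eqI iffI)
    fix b assume "b \<in> {b. \<forall>y\<in>A. b {z, y} = (y \<in> S)}"
    then show "b \<in> Pi (pairs n) B" unfolding B_def by auto
  next
    fix b assume b: "b \<in> Pi (pairs n) B"
    have "b {z, y} = (y \<in> S)" if "y \<in> A" for y
    proof -
      have "{z, y} \<in> pairs n" using Kp that by auto
      then have "b {z, y} \<in> B {z, y}" using b by auto
      then show ?thesis unfolding B_def using that by auto
    qed
    then show "b \<in> {b. \<forall>y\<in>A. b {z, y} = (y \<in> S)}" by auto
  qed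
  have "measure_pmf.prob (bern n p) (Pi (pairs n) B) = (\<Prod>e\<in>pairs n. measure_pmf.prob (bernoulli_pmf p) (B e))"
    unfolding bern_def by (rule measure_Pi_pmf_Pi[OF finite_pairs])
  also have "\<dots> \<ge> (\<Prod>e\<in>pairs n. if e \<in> ?K then ?c else 1)"
  proof (rule prod_mono)
    fix e assume e: "e \<in> pairs n"
    show "0 \<le> (if e \<in> ?K then ?c else 1) \<and> (if e \<in> ?K then ?c else 1) \<le> measure_pmf.prob (bernoulli_pmf p) (B e)"
    proof (cases "e \<in> ?K")
      case True
      then obtain y where y: "y \<in> A" "e = {z, y}" by auto
      have "(y \<in> S) \<in> B e"
      proof -
        have "y' = y" if "y' \<in> A" "e = {z, y'}" for y'
          using that y z(2) by (auto simp: doubleton_eq_iff)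
        then show ?thesis unfolding B_def by auto
      qed
      then have "B e \<noteq> {}" by auto
      then show ?thesis using bern_lower[OF p] True c by auto
    next
      case False
      then have "B e = UNIV" unfolding B_def by auto
      then show ?thesis using False by simp
    qed
  qed
  also have "(\<Prod>e\<in>pairs n. if e \<in> ?K then ?c else 1) = ?c ^ card ?K"
  proof -
    have "(\<Prod>e\<in>pairs n. if e \<in> ?K then ?c else 1) = (\<Prod>e\<in>pairs n \<inter> {e. e \<in> ?K}. ?c) * (\<Prod>e\<in>pairs n \<inter> - {e. e \<in> ?K}. 1)"
      by (rule prod.If_cases[OF finite_pairs])
    also have "pairs n \<inter> {e. e \<in> ?K} = ?K" using Kp by auto
    finally show ?thesis by simp
  qed
  also have "?c ^ card ?K \<ge> ?c ^ k"
  proof (rule power_decreasing)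
    show "card ?K \<le> k" using card_image_le[of A "\<lambda>y. {z, y}"] A finite_subset[OF A(1)] by fastforce
  qed (use c in auto)
  finally show ?thesis using eqset by simp
qed

lemma Fail_bound:
  assumes p: "0 < p" "p < 1" and f: "f \<in> Pi\<^sub>E {..<k} (\<lambda>_. {..<n})" and T: "T \<subseteq> {..<k}"
  shows "measure_pmf.prob (bern n p) (Fail k n f T) \<le> (1 - min p (1 - p) ^ k) ^ (n - k)"
proof -
  let ?c = "min p (1 - p)"
  let ?r = "1 - ?c ^ k"
  define A where "A = f ` {..<k}"
  define S where "S = f ` T"
  define Z where "Z = {..<n} - A"
  define W where "W z b = (\<forall>y\<in>A. b {z, y} = (y \<in> S))" for z b
  have c: "0 < ?c" "?c \<le> 1" using p by auto
  have r: "0 \<le> ?r" "?r \<le> 1" using c by (auto simp: power_le_one)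
  have A: "A \<subseteq> {..<n}" "card A \<le> k" using f unfolding A_def
    by (auto simp: PiE_iff intro: card_image_le[of "{..<k}", simplified])
  have finA: "finite A" using A(1) finite_subset by blast
  have cardZ: "card Z \<ge> n - k"
  proof -
    have "card Z = n - card A" unfolding Z_def using A(1) finA by (simp add: card_Diff_subset)
    then show ?thesis using A(2) by simp
  qed
  have sub: "Fail k n f T \<subseteq> {b. \<forall>z\<in>Z. \<not> W z b}"
  proof (intro subsetI CollectI ballI notI)
    fix b z assume b: "b \<in> Fail k n f T" and z: "z \<in> Z" and w: "W z b"
    have "\<forall>i<k. {z, f i} \<in> Eb n b \<longleftrightarrow> f i \<in> f ` T"
    proof (intro allI impI)
      fix i assume i: "i < k"
      have fi: "f i \<in> A" using i unfolding A_def by auto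
      have "{z, f i} \<in> pairs n" using z fi A(1) unfolding Z_def by (auto simp: pairs_iff)
      then have "{z, f i} \<in> Eb n b \<longleftrightarrow> b {z, f i}" unfolding Eb_def by auto
      also have "\<dots> \<longleftrightarrow> f i \<in> S" using w fi unfolding W_def by auto
      finally show "{z, f i} \<in> Eb n b \<longleftrightarrow> f i \<in> f ` T" unfolding S_def .
    qed
    moreover have "z < n" "z \<notin> f ` {..<k}" using z unfolding Z_def A_def by auto
    ultimately show False using b unfolding Fail_def by blast
  qed
  have "measure_pmf.prob (bern n p) (Fail k n f T) \<le> measure_pmf.prob (bern n p) {b. \<forall>z\<in>Z. \<not> W z b}"
    using sub by (intro measure_pmf.finite_measure_mono) auto
  also have "\<dots> = (\<Prod>z\<in>Z. measure_pmf.prob (bern n p) {b. \<not> W z b})"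
    unfolding bern_def
  proof (rule prob_Pi_pmf_blocks[where K = "\<lambda>z. (\<lambda>y. {z, y}) ` A"])
    show "finite Z" unfolding Z_def by simp
    show "finite (pairs n)" by (rule finite_pairs)
    show "(\<lambda>y. {z, y}) ` A \<subseteq> pairs n" if "z \<in> Z" for z
      using that A(1) unfolding Z_def by (auto simp: pairs_iff)
    show "(\<lambda>y. {z, y}) ` A \<inter> (\<lambda>y. {z', y}) ` A = {}" if "z \<in> Z" "z' \<in> Z" "z \<noteq> z'" for z z'
      using that unfolding Z_def by (auto simp: doubleton_eq_iff)
    show "(\<not> W z b) = (\<not> W z b')" if "z \<in> Z" "\<And>e. e \<in> (\<lambda>y. {z, y}) ` A \<Longrightarrow> b e = b' e" for z b b'
      using that unfolding W_def by auto
  qed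
  also have "\<dots> \<le> (\<Prod>z\<in>Z. ?r)"
  proof (rule prod_mono)
    fix z assume z: "z \<in> Z"
    have "measure_pmf.prob (bern n p) {b. \<not> W z b} = 1 - measure_pmf.prob (bern n p) {b. W z b}"
    proof -
      have "{b. \<not> W z b} = space (measure_pmf (bern n p)) - {b. W z b}" by auto
      then show ?thesis using measure_pmf.prob_compl[of "{b. W z b}" "bern n p"] by simp
    qed
    moreover have "measure_pmf.prob (bern n p) {b. W z b} \<ge> ?c ^ k"
      unfolding W_def by (rule prob_W_lower[OF p A]) (use z in \<open>auto simp: Z_def\<close>)
    ultimately show "0 \<le> measure_pmf.prob (bern n p) {b. \<not> W z b} \<and> measure_pmf.prob (bern n p) {b. \<not> W z b} \<le> ?r"
      by simp
  qed
  also have "\<dots> = ?r ^ card Z" by simp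
  also have "\<dots> \<le> ?r ^ (n - k)" by (rule power_decreasing[OF cardZ r])
  finally show ?thesis .
qed

lemma ext_fail_bound:
  assumes p: "0 < p" "p < 1"
  shows "measure_pmf.prob (bern n p) {b. \<not> ext_fun k n (Eb n b)} \<le> real n ^ k * 2 ^ k * (1 - min p (1 - p) ^ k) ^ (n - k)"
proof -
  let ?I = "Pi\<^sub>E {..<k} (\<lambda>_. {..<n}) \<times> Pow {..<k}"
  let ?B = "(1 - min p (1 - p) ^ k) ^ (n - k)"
  have eq: "{b. \<not> ext_fun k n (Eb n b)} = (\<Union>fT\<in>?I. Fail k n (fst fT) (snd fT))"
  proof (intro set_eqI iffI)
    fix b assume "b \<in> {b. \<not> ext_fun k n (Eb n b)}"
    then obtain f T where fT: "f \<in> Pi\<^sub>E {..<k} (\<lambda>_. {..<n})" "T \<subseteq> {..<k}" "b \<in> Fail k n f T"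
      unfolding ext_fun_def Fail_def by blast
    then show "b \<in> (\<Union>fT\<in>?I. Fail k n (fst fT) (snd fT))" by (intro UN_I[of "(f, T)"]) auto
  next
    fix b assume "b \<in> (\<Union>fT\<in>?I. Fail k n (fst fT) (snd fT))"
    then obtain f T where fT: "f \<in> Pi\<^sub>E {..<k} (\<lambda>_. {..<n})" "T \<subseteq> {..<k}" "b \<in> Fail k n f T"
      by auto
    then show "b \<in> {b. \<not> ext_fun k n (Eb n b)}" unfolding ext_fun_def Fail_def by blast
  qed
  have finI: "finite ?I" by (intro finite_cartesian_product finite_PiE) auto
  have "measure_pmf.prob (bern n p) {b. \<not> ext_fun k n (Eb n b)} \<le> (\<Sum>fT\<in>?I. measure_pmf.prob (bern n p) (Fail k n (fst fT) (snd fT)))"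
    unfolding eq by (rule measure_pmf.finite_measure_subadditive_finite[OF finI]) auto
  also have "\<dots> \<le> (\<Sum>fT\<in>?I. ?B)"
    by (rule sum_mono) (use Fail_bound[OF p] in auto)
  also have "\<dots> = real (card ?I) * ?B" by simp
  also have "card ?I = n ^ k * 2 ^ k" by (simp add: card_cartesian_product card_PiE card_Pow)
  finally show ?thesis by simp
qed


lemma var_bound:
  fixes M :: "'a pmf" and R :: "'v \<Rightarrow> 'a set"
  assumes finM: "finite (set_pmf M)" and finV: "finite V" and Ov: "Ov \<subseteq> V \<times> V"
    and indep: "\<And>v w. v \<in> V \<Longrightarrow> w \<in> V \<Longrightarrow> (v, w) \<notin> Ov \<Longrightarrow>
        measure_pmf.prob M (R v \<inter> R w) = measure_pmf.prob M (R v) * measure_pmf.prob M (R w)"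
  shows "measure_pmf.variance M (\<lambda>x. \<Sum>v\<in>V. indicator (R v) x) \<le> real (card Ov)"
proof -
  let ?X = "\<lambda>x. \<Sum>v\<in>V. (indicator (R v) x :: real)"
  let ?P = "measure_pmf.prob M"
  have int: "integrable M f" for f :: "'a \<Rightarrow> real" by (rule integrable_measure_pmf_finite[OF finM])
  have EX: "measure_pmf.expectation M ?X = (\<Sum>v\<in>V. ?P (R v))"
    by (subst Bochner_Integration.integral_sum) (auto intro: int)
  have sq: "(?X x)\<^sup>2 = (\<Sum>v\<in>V. \<Sum>w\<in>V. indicator (R v \<inter> R w) x)" for x
    by (simp add: power2_eq_square sum_product indicator_inter_arith)
  have EX2: "measure_pmf.expectation M (\<lambda>x. (?X x)\<^sup>2) = (\<Sum>v\<in>V. \<Sum>w\<in>V. ?P (R v \<inter> R w))"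
  proof -
    have "measure_pmf.expectation M (\<lambda>x. \<Sum>v\<in>V. \<Sum>w\<in>V. (indicator (R v \<inter> R w) x :: real)) =
          (\<Sum>v\<in>V. measure_pmf.expectation M (\<lambda>x. \<Sum>w\<in>V. indicator (R v \<inter> R w) x))"
      by (rule Bochner_Integration.integral_sum) (rule int)
    also have "\<dots> = (\<Sum>v\<in>V. \<Sum>w\<in>V. measure_pmf.expectation M (indicator (R v \<inter> R w)))"
      by (intro sum.cong refl Bochner_Integration.integral_sum int)
    finally show ?thesis unfolding sq by simp
  qed
  have "measure_pmf.variance M ?X = measure_pmf.expectation M (\<lambda>x. (?X x)\<^sup>2) - (measure_pmf.expectation M ?X)\<^sup>2"
    by (rule measure_pmf.variance_eq) (auto intro: int)
  also have "\<dots> = (\<Sum>v\<in>V. \<Sum>w\<in>V. ?P (R v \<inter> R w) - ?P (R v) * ?P (R w))"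
    unfolding EX EX2 by (simp add: power2_eq_square sum_product sum_subtractf)
  also have "\<dots> \<le> (\<Sum>v\<in>V. \<Sum>w\<in>V. if (v, w) \<in> Ov then 1 else 0)"
  proof (intro sum_mono)
    fix v w assume v: "v \<in> V" and w: "w \<in> V"
    show "?P (R v \<inter> R w) - ?P (R v) * ?P (R w) \<le> (if (v, w) \<in> Ov then 1 else 0)"
    proof (cases "(v, w) \<in> Ov")
      case True
      have "?P (R v \<inter> R w) \<le> 1" by simp
      moreover have "0 \<le> ?P (R v) * ?P (R w)" by simp
      ultimately have "?P (R v \<inter> R w) - ?P (R v) * ?P (R w) \<le> 1" by linarith
      then show ?thesis using True by simp
    next
      case False
      then show ?thesis using indep[OF v w] by simp
    qed
  qed
  also have "\<dots> = (\<Sum>x\<in>V \<times> V. if x \<in> Ov then 1 else 0)"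
    by (simp add: sum.cartesian_product case_prod_beta)
  also have "\<dots> = real (card Ov)"
  proof -
    have "(\<Sum>x\<in>V \<times> V. if x \<in> Ov then 1 else 0) = (\<Sum>x\<in>{x\<in>V \<times> V. x \<in> Ov}. (1::real))"
      by (rule sum.inter_filter[symmetric]) (use finV in simp)
    also have "{x\<in>V \<times> V. x \<in> Ov} = Ov" using Ov by auto
    finally show ?thesis by simp
  qed
  finally show ?thesis .
qed


definition Rv :: "(nat \<Rightarrow> nat \<Rightarrow> bool) \<Rightarrow> nat \<Rightarrow> (nat \<Rightarrow> nat) \<Rightarrow> (nat set \<Rightarrow> bool) set" where
  "Rv c q v = {b. \<forall>i<q. \<forall>j<q. i < j \<longrightarrow> b {v i, v j} = c i j}"

definition Bs :: "(nat \<Rightarrow> nat \<Rightarrow> bool) \<Rightarrow> nat \<Rightarrow> (nat \<Rightarrow> nat) \<Rightarrow> nat set \<Rightarrow> bool set" where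
  "Bs c q v e = {x. \<forall>i<q. \<forall>j<q. i < j \<longrightarrow> e = {v i, v j} \<longrightarrow> x = c i j}"

definition Ov :: "nat \<Rightarrow> nat \<Rightarrow> ((nat \<Rightarrow> nat) \<times> (nat \<Rightarrow> nat)) set" where
  "Ov q n = {(v, w) \<in> Inj q n \<times> Inj q n. \<exists>i<q. \<exists>j<q. \<exists>i'<q. \<exists>j'<q. i \<noteq> j \<and> i' \<noteq> j' \<and> v i = w i' \<and> v j = w j'}"

definition Xc :: "(nat \<Rightarrow> nat \<Rightarrow> bool) \<Rightarrow> nat \<Rightarrow> nat \<Rightarrow> (nat set \<Rightarrow> bool) \<Rightarrow> real" where
  "Xc c q n b = (\<Sum>v\<in>Inj q n. indicator (Rv c q v) b)"

lemma finite_Inj: "finite (Inj q n)"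
  unfolding Inj_def by (rule finite_subset[OF _ finite_PiE[of "{..<q}" "\<lambda>_. {..<n}"]]) auto

lemma Inj_pair:
  assumes "v \<in> Inj q n" "i < q" "j < q" "i \<noteq> j"
  shows "{v i, v j} \<in> pairs n"
proof -
  have "v i \<noteq> v j" using assms unfolding Inj_def by (auto dest: inj_onD)
  moreover have "v i < n" "v j < n" using assms unfolding Inj_def by (auto simp: PiE_iff)
  ultimately show ?thesis by (simp add: pairs_iff)
qed

lemma card_filter_sum:
  assumes "finite A"
  shows "real (card {x\<in>A. P x}) = (\<Sum>x\<in>A. if P x then 1 else 0)"
proof -
  have "(\<Sum>x\<in>A. if P x then 1 else (0::real)) = (\<Sum>x\<in>{x\<in>A. P x}. 1)"
    by (rule sum.inter_filter[symmetric]) (rule assms)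
  then show ?thesis by simp
qed

lemma Pc_eq_Xc: "Pc c q n (Eb n b) = Xc c q n b / real n ^ q"
proof -
  have "{v \<in> Inj q n. \<forall>i<q. \<forall>j<q. i < j \<longrightarrow> ({v i, v j} \<in> Eb n b \<longleftrightarrow> c i j)} = {v \<in> Inj q n. b \<in> Rv c q v}"
  proof (intro Collect_cong conj_cong refl)
    fix v assume v: "v \<in> Inj q n"
    have "{v i, v j} \<in> Eb n b \<longleftrightarrow> b {v i, v j}" if "i < q" "j < q" "i < j" for i j
      using Inj_pair[OF v that(1,2)] that(3) unfolding Eb_def by auto
    then show "(\<forall>i<q. \<forall>j<q. i < j \<longrightarrow> ({v i, v j} \<in> Eb n b \<longleftrightarrow> c i j)) = (b \<in> Rv c q v)"
      unfolding Rv_def by auto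
  qed
  moreover have "real (card {v \<in> Inj q n. b \<in> Rv c q v}) = Xc c q n b"
    unfolding Xc_def card_filter_sum[OF finite_Inj] by (simp add: indicator_def of_bool_def)
  ultimately show ?thesis unfolding Pc_def by simp
qed

lemma Rv_Pi:
  assumes "v \<in> Inj q n"
  shows "Rv c q v = Pi (pairs n) (Bs c q v)"
proof (intro set_eqI iffI)
  fix b assume "b \<in> Rv c q v"
  then show "b \<in> Pi (pairs n) (Bs c q v)" unfolding Rv_def Bs_def by auto
next
  fix b assume b: "b \<in> Pi (pairs n) (Bs c q v)"
  have "b {v i, v j} = c i j" if "i < q" "j < q" "i < j" for i j
  proof -
    have "{v i, v j} \<in> pairs n" using Inj_pair[OF assms that(1,2)] that(3) by simp
    then have "b {v i, v j} \<in> Bs c q v {v i, v j}" using b by auto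
    then show ?thesis unfolding Bs_def using that by auto
  qed
  then show "b \<in> Rv c q v" unfolding Rv_def by auto
qed

lemma Bs_UNIV:
  assumes "\<not> (\<exists>i<q. \<exists>j<q. i < j \<and> e = {v i, v j})"
  shows "Bs c q v e = UNIV"
  using assms unfolding Bs_def by auto

lemma prob_Rv_indep:
  assumes p: "0 < p" "p < 1" and v: "v \<in> Inj q n" and w: "w \<in> Inj q n" and nov: "(v, w) \<notin> Ov q n"
  shows "measure_pmf.prob (bern n p) (Rv c q v \<inter> Rv c q w) =
         measure_pmf.prob (bern n p) (Rv c q v) * measure_pmf.prob (bern n p) (Rv c q w)"
proof -
  let ?P = "measure_pmf.prob (bernoulli_pmf p)"
  have one: "Bs c q v e = UNIV \<or> Bs c q w e = UNIV" for e
  proof (rule ccontr)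
    assume H: "\<not> (Bs c q v e = UNIV \<or> Bs c q w e = UNIV)"
    have "\<exists>i<q. \<exists>j<q. i < j \<and> e = {v i, v j}" using H Bs_UNIV[of q e v c] by blast
    then obtain i j where ij: "i < q" "j < q" "i < j" "e = {v i, v j}" by blast
    have "\<exists>i<q. \<exists>j<q. i < j \<and> e = {w i, w j}" using H Bs_UNIV[of q e w c] by blast
    then obtain i' j' where ij': "i' < q" "j' < q" "i' < j'" "e = {w i', w j'}" by blast
    have "(v i = w i' \<and> v j = w j') \<or> (v i = w j' \<and> v j = w i')" using ij(4) ij'(4) by (auto simp: doubleton_eq_iff)
    moreover have "i \<noteq> j" "i' \<noteq> j'" "i < q" "i' < q" using ij ij' by auto
    ultimately have "(v, w) \<in> Ov q n"
      unfolding Ov_def using v w ij(2) ij'(2) by blast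
    with nov show False by simp
  qed
  have "Rv c q v \<inter> Rv c q w = Pi (pairs n) (\<lambda>e. Bs c q v e \<inter> Bs c q w e)"
    unfolding Rv_Pi[OF v] Rv_Pi[OF w] by auto
  then have "measure_pmf.prob (bern n p) (Rv c q v \<inter> Rv c q w) = (\<Prod>e\<in>pairs n. ?P (Bs c q v e \<inter> Bs c q w e))"
    unfolding bern_def by (simp add: measure_Pi_pmf_Pi[OF finite_pairs])
  also have "\<dots> = (\<Prod>e\<in>pairs n. ?P (Bs c q v e) * ?P (Bs c q w e))"
  proof (rule prod.cong[OF refl])
    fix e show "?P (Bs c q v e \<inter> Bs c q w e) = ?P (Bs c q v e) * ?P (Bs c q w e)"
      using one[of e] by auto
  qed
  also have "\<dots> = (\<Prod>e\<in>pairs n. ?P (Bs c q v e)) * (\<Prod>e\<in>pairs n. ?P (Bs c q w e))"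
    by (rule prod.distrib)
  also have "\<dots> = measure_pmf.prob (bern n p) (Rv c q v) * measure_pmf.prob (bern n p) (Rv c q w)"
    unfolding Rv_Pi[OF v] Rv_Pi[OF w] bern_def by (simp add: measure_Pi_pmf_Pi[OF finite_pairs])
  finally show ?thesis .
qed

definition piq :: "real \<Rightarrow> (nat \<Rightarrow> nat \<Rightarrow> bool) \<Rightarrow> nat \<Rightarrow> real" where
  "piq p c q = (\<Prod>ij\<in>{(i, j). i < j \<and> j < q}. if c (fst ij) (snd ij) then p else 1 - p)"

lemma prob_Rv:
  assumes p: "0 < p" "p < 1" and v: "v \<in> Inj q n"
  shows "measure_pmf.prob (bern n p) (Rv c q v) = piq p c q"
proof -
  let ?P = "measure_pmf.prob (bernoulli_pmf p)"
  let ?I = "{(i, j). i < j \<and> j < q}"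
  let ?g = "\<lambda>ij. {v (fst ij), v (snd ij)}"
  have injv: "inj_on v {..<q}" using v unfolding Inj_def by auto
  have uniq: "i = i' \<and> j = j'" if "i < j" "j < q" "i' < j'" "j' < q" "{v i, v j} = {v i', v j'}" for i j i' j'
  proof -
    have "(v i = v i' \<and> v j = v j') \<or> (v i = v j' \<and> v j = v i')" using that(5) by (auto simp: doubleton_eq_iff)
    then have "(i = i' \<and> j = j') \<or> (i = j' \<and> j = i')"
      using injv that by (auto dest: inj_onD)
    then show ?thesis using that by auto
  qed
  have inj_g: "inj_on ?g ?I"
    by (rule inj_onI) (use uniq in auto)
  have gI: "?g ` ?I \<subseteq> pairs n" using Inj_pair[OF v] by auto
  have "measure_pmf.prob (bern n p) (Rv c q v) = (\<Prod>e\<in>pairs n. ?P (Bs c q v e))"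
    unfolding Rv_Pi[OF v] bern_def by (simp add: measure_Pi_pmf_Pi[OF finite_pairs])
  also have "\<dots> = (\<Prod>e\<in>?g ` ?I. ?P (Bs c q v e))"
  proof (rule prod.mono_neutral_right[OF finite_pairs gI])
    show "\<forall>e\<in>pairs n - ?g ` ?I. ?P (Bs c q v e) = 1"
    proof
      fix e assume "e \<in> pairs n - ?g ` ?I"
      then have "\<not> (\<exists>i<q. \<exists>j<q. i < j \<and> e = {v i, v j})" by force
      then show "?P (Bs c q v e) = 1" using Bs_UNIV by simp
    qed
  qed
  also have "\<dots> = (\<Prod>ij\<in>?I. ?P (Bs c q v (?g ij)))"
    by (subst prod.reindex[OF inj_g]) (simp add: comp_def)
  also have "\<dots> = piq p c q"
    unfolding piq_def
  proof (rule prod.cong[OF refl])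
    fix ij assume ij: "ij \<in> ?I"
    have "Bs c q v (?g ij) = {c (fst ij) (snd ij)}"
    proof -
      have "x = c (fst ij) (snd ij)" if "x \<in> Bs c q v (?g ij)" for x
      proof -
        obtain i j where ijeq: "ij = (i, j)" by (cases ij)
        have H: "\<forall>i'<q. \<forall>j'<q. i' < j' \<longrightarrow> {v i, v j} = {v i', v j'} \<longrightarrow> x = c i' j'" "i < j" "j < q"
          using that ij unfolding Bs_def ijeq by auto
        have "i < q" using H(2,3) by linarith
        then have "x = c i j" using H(1)[rule_format, of i j] H(2,3) by simp
        then show ?thesis using ijeq by simp
      qed
      moreover have "c (fst ij) (snd ij) \<in> Bs c q v (?g ij)"
      proof -
        obtain i j where ijeq: "ij = (i, j)" by (cases ij)
        have H: "i < j" "j < q" using ij ijeq by auto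
        have "c i j \<in> Bs c q v {v i, v j}" unfolding Bs_def
        proof (intro CollectI allI impI)
          fix i' j' assume "i' < q" "j' < q" "i' < j'" "{v i, v j} = {v i', v j'}"
          then have "i = i' \<and> j = j'" using uniq[OF H] by blast
          then show "c i j = c i' j'" by simp
        qed
        then show ?thesis using ijeq by simp
      qed
      ultimately show ?thesis by blast
    qed
    then show "?P (Bs c q v (?g ij)) = (if c (fst ij) (snd ij) then p else 1 - p)"
      using p by (simp add: measure_pmf_single)
  qed
  finally show ?thesis .
qed


lemma finite_set_bern: "finite (set_pmf (bern n p))"
  unfolding bern_def by (subst set_Pi_pmf[OF finite_pairs]) (auto intro!: finite_PiE_dflt finite_pairs)

lemma EXc:
  assumes p: "0 < p" "p < 1"
  shows "measure_pmf.expectation (bern n p) (Xc c q n) = real (card (Inj q n)) * piq p c q"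
proof -
  have "measure_pmf.expectation (bern n p) (Xc c q n) =
        (\<Sum>v\<in>Inj q n. measure_pmf.expectation (bern n p) (indicator (Rv c q v)))"
    unfolding Xc_def by (rule Bochner_Integration.integral_sum) (rule integrable_measure_pmf_finite[OF finite_set_bern])
  also have "\<dots> = (\<Sum>v\<in>Inj q n. piq p c q)"
    by (rule sum.cong[OF refl]) (simp add: prob_Rv[OF p])
  finally show ?thesis by simp
qed

lemma card_pair_count:
  assumes "i' < q" "j' < q" "i' \<noteq> j'"
  shows "card {(v, w) \<in> Pi\<^sub>E {..<q} (\<lambda>_. {..<n::nat}) \<times> Pi\<^sub>E {..<q} (\<lambda>_. {..<n}). v i = w i' \<and> v j = w j'}
         \<le> n ^ q * n ^ (q - 2)"
proof -
  let ?P = "Pi\<^sub>E {..<q} (\<lambda>_. {..<n::nat})"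
  let ?S = "{(v, w) \<in> ?P \<times> ?P. v i = w i' \<and> v j = w j'}"
  let ?R = "{..<q} - {i', j'}"
  let ?h = "\<lambda>(v, w). (v, restrict w ?R)"
  have "inj_on ?h ?S"
  proof (rule inj_onI)
    fix x y assume x: "x \<in> ?S" and y: "y \<in> ?S" and eq: "?h x = ?h y"
    obtain v w where xv: "x = (v, w)" by (cases x)
    obtain v' w' where yv: "y = (v', w')" by (cases y)
    have vv: "v = v'" and ww: "restrict w ?R = restrict w' ?R" using eq xv yv by auto
    have "w = w'"
    proof (rule PiE_ext)
      show "w \<in> ?P" "w' \<in> ?P" using x y xv yv by auto
      fix t assume t: "t \<in> {..<q}"
      show "w t = w' t"
      proof (cases "t \<in> ?R")
        case True
        have "restrict w ?R t = restrict w' ?R t" using ww by simp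
        then show ?thesis using True by simp
      next
        case False
        then have "t = i' \<or> t = j'" using t by auto
        then show ?thesis using x y xv yv vv by auto
      qed
    qed
    then show "x = y" using xv yv vv by simp
  qed
  moreover have "?h ` ?S \<subseteq> ?P \<times> Pi\<^sub>E ?R (\<lambda>_. {..<n})"
  proof (rule image_subsetI)
    fix x assume "x \<in> ?S"
    then obtain v w where vw: "x = (v, w)" "v \<in> ?P" "w \<in> ?P" by auto
    have "restrict w ?R \<in> Pi\<^sub>E ?R (\<lambda>_. {..<n})"
      by (subst restrict_PiE_iff) (use vw(3) in \<open>auto simp: PiE_iff\<close>)
    then show "?h x \<in> ?P \<times> Pi\<^sub>E ?R (\<lambda>_. {..<n})" using vw by simp
  qed
  ultimately have "card ?S \<le> card (?P \<times> Pi\<^sub>E ?R (\<lambda>_. {..<n}))"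
    by (intro card_inj_on_le) (auto intro!: finite_PiE finite_cartesian_product)
  also have "\<dots> = n ^ q * n ^ (q - 2)"
  proof -
    have "card ?R = q - 2" using assms by (simp add: card_Diff_subset)
    then show ?thesis by (simp add: card_cartesian_product card_PiE)
  qed
  finally show ?thesis .
qed

lemma card_Ov: "real (card (Ov q n)) \<le> real q ^ 4 * real n ^ (2 * q - 2)"
proof (cases "q < 2")
  case True
  then have "Ov q n = {}" unfolding Ov_def by auto
  then show ?thesis by simp
next
  case False
  let ?P = "Pi\<^sub>E {..<q} (\<lambda>_. {..<n::nat})"
  let ?Idx = "{..<q} \<times> {..<q} \<times> {(i', j'). i' < q \<and> j' < q \<and> i' \<noteq> j'}"
  let ?S = "\<lambda>(i, j, i', j'). {(v, w) \<in> ?P \<times> ?P. v i = w i' \<and> v j = w j'}"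
  have sub: "Ov q n \<subseteq> (\<Union>t\<in>?Idx. ?S t)"
  proof
    fix x assume "x \<in> Ov q n"
    then obtain v w i j i' j' where x: "x = (v, w)" "v \<in> Inj q n" "w \<in> Inj q n" "i < q" "j < q" "i' < q" "j' < q"
      "i' \<noteq> j'" "v i = w i'" "v j = w j'"
      unfolding Ov_def by blast
    then have xS: "x \<in> ?S (i, j, i', j')" unfolding Inj_def by auto
    have idx: "(i, j, i', j') \<in> ?Idx" using x by auto
    show "x \<in> (\<Union>t\<in>?Idx. ?S t)" by (rule UN_I[where B = ?S, OF idx xS])
  qed
  have finIdx: "finite ?Idx" by (rule finite_subset[of _ "{..<q} \<times> {..<q} \<times> {..<q} \<times> {..<q}"]) auto
  have "card (Ov q n) \<le> card (\<Union>t\<in>?Idx. ?S t)"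
  proof (rule card_mono[OF _ sub])
    show "finite (\<Union>t\<in>?Idx. ?S t)"
      by (rule finite_subset[of _ "?P \<times> ?P"]) (auto intro!: finite_PiE finite_cartesian_product)
  qed
  also have "\<dots> \<le> (\<Sum>t\<in>?Idx. card (?S t))" by (rule card_UN_le[OF finIdx])
  also have "\<dots> \<le> (\<Sum>t\<in>?Idx. n ^ q * n ^ (q - 2))"
  proof (rule sum_mono)
    fix t assume "t \<in> ?Idx"
    then obtain i j i' j' where "t = (i, j, i', j')" "i' < q" "j' < q" "i' \<noteq> j'" by auto
    then show "card (?S t) \<le> n ^ q * n ^ (q - 2)" using card_pair_count by simp
  qed
  also have "\<dots> = card ?Idx * (n ^ q * n ^ (q - 2))" by simp
  also have "\<dots> \<le> q ^ 4 * (n ^ q * n ^ (q - 2))"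
  proof (rule mult_right_mono)
    have "card ?Idx \<le> card ({..<q} \<times> {..<q} \<times> {..<q} \<times> {..<q})"
      by (rule card_mono) auto
    also have "\<dots> = q ^ 4" by (simp add: card_cartesian_product power4_eq_xxxx)
    finally show "card ?Idx \<le> q ^ 4" .
  qed simp
  also have "n ^ q * n ^ (q - 2) = n ^ (2 * q - 2)"
  proof -
    have "q + (q - 2) = 2 * q - 2" using False by simp
    then show ?thesis by (simp add: power_add[symmetric])
  qed
  finally have "card (Ov q n) \<le> q ^ 4 * n ^ (2 * q - 2)" .
  then have "real (card (Ov q n)) \<le> real (q ^ 4 * n ^ (2 * q - 2))" by (rule of_nat_mono)
  then show ?thesis by simp
qed

lemma conc_bound:
  assumes p: "0 < p" "p < 1" and eps: "\<epsilon> > 0" and n: "n > 0"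
  shows "measure_pmf.prob (bern n p)
           {b. \<epsilon> \<le> \<bar>Pc c q n (Eb n b) - real (card (Inj q n)) * piq p c q / real n ^ q\<bar>}
         \<le> real q ^ 4 / (\<epsilon>\<^sup>2 * (real n)\<^sup>2)"
proof -
  let ?M = "bern n p"
  let ?X = "Xc c q n"
  let ?mu = "real (card (Inj q n)) * piq p c q"
  define a where "a = \<epsilon> * real n ^ q"
  have npos: "real n ^ q > 0" using n by simp
  have a: "a > 0" unfolding a_def using eps npos by simp
  have int: "integrable (measure_pmf ?M) f" for f :: "_ \<Rightarrow> real"
    by (rule integrable_measure_pmf_finite[OF finite_set_bern])
  have EX: "measure_pmf.expectation ?M ?X = ?mu" by (rule EXc[OF p])
  have seteq: "{b. \<epsilon> \<le> \<bar>Pc c q n (Eb n b) - ?mu / real n ^ q\<bar>} =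
               {b \<in> space (measure_pmf ?M). a \<le> \<bar>?X b - measure_pmf.expectation ?M ?X\<bar>}"
  proof (intro set_eqI)
    fix b
    have "Pc c q n (Eb n b) - ?mu / real n ^ q = (?X b - ?mu) / real n ^ q"
      unfolding Pc_eq_Xc by (simp add: diff_divide_distrib)
    then have "\<bar>Pc c q n (Eb n b) - ?mu / real n ^ q\<bar> = \<bar>?X b - ?mu\<bar> / real n ^ q"
      using npos by simp
    then have "(\<epsilon> \<le> \<bar>Pc c q n (Eb n b) - ?mu / real n ^ q\<bar>) = (a \<le> \<bar>?X b - ?mu\<bar>)"
      unfolding a_def using npos by (simp add: pos_le_divide_eq)
    then show "b \<in> {b. \<epsilon> \<le> \<bar>Pc c q n (Eb n b) - ?mu / real n ^ q\<bar>} \<longleftrightarrow>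
               b \<in> {b \<in> space (measure_pmf ?M). a \<le> \<bar>?X b - measure_pmf.expectation ?M ?X\<bar>}"
      using EX by simp
  qed
  have "measure_pmf.prob ?M {b \<in> space (measure_pmf ?M). a \<le> \<bar>?X b - measure_pmf.expectation ?M ?X\<bar>}
        \<le> measure_pmf.variance ?M ?X / a\<^sup>2"
    by (rule measure_pmf.Chebyshev_inequality) (auto intro: int a)
  also have "measure_pmf.variance ?M ?X \<le> real (card (Ov q n))"
    unfolding Xc_def
  proof (rule var_bound[OF finite_set_bern finite_Inj])
    show "Ov q n \<subseteq> Inj q n \<times> Inj q n" unfolding Ov_def by auto
    show "measure_pmf.prob ?M (Rv c q v \<inter> Rv c q w) = measure_pmf.prob ?M (Rv c q v) * measure_pmf.prob ?M (Rv c q w)"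
      if "v \<in> Inj q n" "w \<in> Inj q n" "(v, w) \<notin> Ov q n" for v w
      by (rule prob_Rv_indep[OF p that])
  qed
  then have "measure_pmf.variance ?M ?X / a\<^sup>2 \<le> real (card (Ov q n)) / a\<^sup>2"
    using a by (simp add: divide_right_mono)
  also have "\<dots> \<le> real q ^ 4 * real n ^ (2 * q - 2) / a\<^sup>2"
    using a card_Ov by (simp add: divide_right_mono)
  also have "\<dots> \<le> real q ^ 4 / (\<epsilon>\<^sup>2 * (real n)\<^sup>2)"
  proof (cases "q = 0")
    case True then show ?thesis by simp
  next
    case False
    have "a\<^sup>2 = \<epsilon>\<^sup>2 * (real n)\<^sup>2 * real n ^ (2 * q - 2)"
    proof -
      have "2 + (2 * q - 2) = 2 * q" using False by simp
      then have "(real n)\<^sup>2 * real n ^ (2 * q - 2) = real n ^ (2 * q)"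
        by (metis power_add)
      then show ?thesis unfolding a_def by (simp add: power_mult_distrib power_mult[symmetric] mult.commute)
    qed
    then show ?thesis using npos eps n by simp
  qed
  finally show ?thesis using seteq by simp
qed


lemma ext_set_mono: "k \<le> k' \<Longrightarrow> ext_set k' n E \<Longrightarrow> ext_set k n E"
  unfolding ext_set_def by fastforce

lemma ext_fun_set:
  assumes k: "0 < k" and n: "0 < n" and H: "ext_fun k n E"
  shows "ext_set k n E"
  unfolding ext_set_def
proof (intro allI impI)
  fix A S assume A: "A \<subseteq> {..<n}" and cA: "card A \<le> k" and S: "S \<subseteq> A"
  have finA: "finite A" using A finite_subset by blast
  obtain f where f: "f \<in> Pi\<^sub>E {..<k} (\<lambda>_. {..<n})" "f ` {..<k} = A \<or> A = {}"
  proof (cases "A = {}")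
    case True
    show ?thesis by (rule that[of "\<lambda>i\<in>{..<k}. 0"]) (use n True in auto)
  next
    case False
    obtain h where h: "bij_betw h {0..<card A} A" using ex_bij_betw_nat_finite[OF finA] by blast
    have cpos: "card A > 0" using False finA by (simp add: card_gt_0_iff)
    define f where "f = (\<lambda>i\<in>{..<k}. if i < card A then h i else h 0)"
    have himg: "h ` {0..<card A} = A" using h by (simp add: bij_betw_def)
    have "f ` {..<k} = A"
    proof
      show "f ` {..<k} \<subseteq> A" unfolding f_def using himg cpos by auto
      show "A \<subseteq> f ` {..<k}"
      proof
        fix y assume "y \<in> A"
        then have "y \<in> h ` {0..<card A}" using himg by simp
        then obtain i where "i < card A" "y = h i" by auto
        then have "i < k" "f i = y" using cA unfolding f_def by auto
        then show "y \<in> f ` {..<k}" by force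
      qed
    qed
    moreover have "f \<in> Pi\<^sub>E {..<k} (\<lambda>_. {..<n})"
    proof -
      have hA: "h i \<in> A" if "i < card A" for i using himg that by auto
      then have "h i < n" if "i < card A" for i using that A by auto
      then show ?thesis unfolding f_def using cpos by (auto simp: PiE_iff)
    qed
    ultimately show ?thesis using that by blast
  qed
  define T where "T = {i\<in>{..<k}. f i \<in> S}"
  have T: "T \<subseteq> {..<k}" unfolding T_def by auto
  obtain z where z: "z < n" "z \<notin> f ` {..<k}" "\<forall>i<k. {z, f i} \<in> E \<longleftrightarrow> f i \<in> f ` T"
    using H[unfolded ext_fun_def, rule_format, OF f(1) T] by blast
  show "\<exists>z<n. z \<notin> A \<and> (\<forall>y\<in>A. {z, y} \<in> E \<longleftrightarrow> y \<in> S)"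
  proof (cases "A = {}")
    case True then show ?thesis using z(1) by auto
  next
    case False
    then have fA: "f ` {..<k} = A" using f(2) by simp
    have "{z, y} \<in> E \<longleftrightarrow> y \<in> S" if y: "y \<in> A" for y
    proof -
      obtain i where i: "i < k" "y = f i" using y fA by auto
      have "f i \<in> f ` T \<longleftrightarrow> f i \<in> S" using i(1) unfolding T_def by auto
      then show ?thesis using z(3) i by auto
    qed
    then show ?thesis using z(1,2) fA by auto
  qed
qed

lemma card_nonInj:
  "card (Pi\<^sub>E {..<q} (\<lambda>_. {..<n::nat}) - Inj q n) \<le> q ^ 2 * n ^ (q - 1)"
proof -
  let ?P = "Pi\<^sub>E {..<q} (\<lambda>_. {..<n::nat})"
  let ?Idx = "{(i, j). i < q \<and> j < q \<and> i \<noteq> j}"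
  have sub: "?P - Inj q n \<subseteq> (\<Union>ij\<in>?Idx. {v \<in> ?P. v (fst ij) = v (snd ij)})"
  proof
    fix v assume v: "v \<in> ?P - Inj q n"
    then obtain i j where "i < q" "j < q" "i \<noteq> j" "v i = v j" unfolding Inj_def inj_on_def by auto
    then show "v \<in> (\<Union>ij\<in>?Idx. {v \<in> ?P. v (fst ij) = v (snd ij)})" using v by force
  qed
  have finIdx: "finite ?Idx" by (rule finite_subset[of _ "{..<q} \<times> {..<q}"]) auto
  have "card (?P - Inj q n) \<le> card (\<Union>ij\<in>?Idx. {v \<in> ?P. v (fst ij) = v (snd ij)})"
  proof (rule card_mono[OF _ sub])
    show "finite (\<Union>ij\<in>?Idx. {v \<in> ?P. v (fst ij) = v (snd ij)})"
      by (rule finite_subset[of _ ?P]) (auto intro: finite_PiE)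
  qed
  also have "\<dots> \<le> (\<Sum>ij\<in>?Idx. card {v \<in> ?P. v (fst ij) = v (snd ij)})"
    by (rule card_UN_le[OF finIdx])
  also have "\<dots> \<le> (\<Sum>ij\<in>?Idx. n ^ (q - 1))"
    by (rule sum_mono) (use card_coincide in auto)
  also have "\<dots> = card ?Idx * n ^ (q - 1)" by simp
  also have "\<dots> \<le> q ^ 2 * n ^ (q - 1)"
  proof (rule mult_right_mono)
    have "card ?Idx \<le> card ({..<q} \<times> {..<q})" by (rule card_mono) auto
    then show "card ?Idx \<le> q ^ 2" by (simp add: card_cartesian_product power2_eq_square)
  qed simp
  finally show ?thesis .
qed

lemma card_Inj_lim: "(\<lambda>n. real (card (Inj q n)) / real n ^ q) \<longlonglongrightarrow> 1"
proof -
  have bound: "\<bar>real (card (Inj q n)) / real n ^ q - 1\<bar> \<le> real q ^ 2 / real n" if n: "n > 0" for n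
  proof -
    let ?P = "Pi\<^sub>E {..<q} (\<lambda>_. {..<n::nat})"
    have sub: "Inj q n \<subseteq> ?P" unfolding Inj_def by auto
    have cP: "card ?P = n ^ q" by (rule card_PiE_const)
    have "card (?P - Inj q n) = n ^ q - card (Inj q n)"
      using card_Diff_subset[OF finite_Inj sub] cP by simp
    moreover have "card (Inj q n) \<le> n ^ q" using card_mono[OF _ sub] cP by (simp add: finite_PiE)
    ultimately have "real (n ^ q) - real (card (Inj q n)) \<le> real (q ^ 2 * n ^ (q - 1))"
      using card_nonInj[of q n] by (metis of_nat_diff of_nat_mono)
    moreover have "real (card (Inj q n)) \<le> real (n ^ q)" using \<open>card (Inj q n) \<le> n ^ q\<close> by simp
    ultimately have A: "\<bar>real (card (Inj q n)) - real n ^ q\<bar> \<le> real q ^ 2 * real n ^ (q - 1)" by simp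
    have npos: "real n ^ q > 0" using n by simp
    have "\<bar>real (card (Inj q n)) / real n ^ q - 1\<bar> = \<bar>real (card (Inj q n)) - real n ^ q\<bar> / real n ^ q"
    proof -
      have "real (card (Inj q n)) / real n ^ q - 1 = (real (card (Inj q n)) - real n ^ q) / real n ^ q"
        using npos by (simp add: field_simps)
      then show ?thesis using npos by (simp add: abs_divide)
    qed
    also have "\<dots> \<le> real q ^ 2 * real n ^ (q - 1) / real n ^ q"
      using A npos by (simp add: divide_right_mono)
    also have "\<dots> \<le> real q ^ 2 / real n"
    proof (cases "q = 0")
      case True then show ?thesis by simp
    next
      case False
      then have "real n ^ q = real n * real n ^ (q - 1)" by (metis power_eq_if)
      then show ?thesis using n by simp
    qed
    finally show ?thesis .
  qed
  have "(\<lambda>n. real (card (Inj q n)) / real n ^ q - 1) \<longlonglongrightarrow> 0"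
  proof (rule tendsto_sandwich[of "\<lambda>n. - (real q ^ 2 / real n)" _ _ "\<lambda>n. real q ^ 2 / real n"])
    have lb: "- (real q ^ 2 / real n) \<le> real (card (Inj q n)) / real n ^ q - 1 \<and>
              real (card (Inj q n)) / real n ^ q - 1 \<le> real q ^ 2 / real n" if "n > 0" for n
      using abs_le_D1[OF bound[OF that]] abs_le_D2[OF bound[OF that]] by linarith
    show "eventually (\<lambda>n. - (real q ^ 2 / real n) \<le> real (card (Inj q n)) / real n ^ q - 1) sequentially"
      using eventually_gt_at_top[of 0] by (rule eventually_mono) (use lb in blast)
    show "eventually (\<lambda>n. real (card (Inj q n)) / real n ^ q - 1 \<le> real q ^ 2 / real n) sequentially"
      using eventually_gt_at_top[of 0] by (rule eventually_mono) (use lb in blast)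
    have "(\<lambda>n. real q ^ 2 * (1 / real n)) \<longlonglongrightarrow> real q ^ 2 * 0"
      by (intro tendsto_mult tendsto_const lim_1_over_n)
    then show "(\<lambda>n. real q ^ 2 / real n) \<longlonglongrightarrow> 0" by simp
    then show "(\<lambda>n. - (real q ^ 2 / real n)) \<longlonglongrightarrow> 0" using tendsto_minus by fastforce
  qed
  then show ?thesis using Lim_null by blast
qed

lemma summable_poly_geom:
  assumes r: "0 \<le> r" "r < (1::real)"
  shows "summable (\<lambda>n. real n ^ k * r ^ n)"
proof -
  define m where "m = 2 * (k + 1)"
  define s where "s = root m r"
  have m: "m > 0" unfolding m_def by simp
  have s: "0 \<le> s" "s < 1" unfolding s_def using r m by (auto simp: real_root_lt_1_iff)
  have sm: "s ^ m = r" unfolding s_def using m r by (simp add: real_root_pow_pos2)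
  have "(\<lambda>n. of_nat n * s ^ n) \<longlonglongrightarrow> 0"
    using powser_times_n_limit_0[of s] s by simp
  then have "eventually (\<lambda>n. real n * s ^ n < 1) sequentially"
    by (rule order_tendstoD(2)) simp
  then have ev: "eventually (\<lambda>n. real n * s ^ n \<le> 1) sequentially"
    by (rule eventually_mono) simp
  have g: "summable (\<lambda>n. (s ^ (k + 1)) ^ n)"
  proof (rule summable_geometric)
    have "s ^ (k + 1) < 1 ^ (k + 1)" by (rule power_strict_mono[OF s(2) s(1)]) simp
    then show "norm (s ^ (k + 1)) < 1" using s by simp
  qed
  show ?thesis
  proof (rule summable_comparison_test_ev[OF _ g])
    show "eventually (\<lambda>n. norm (real n ^ k * r ^ n) \<le> (s ^ (k + 1)) ^ n) sequentially"
      using ev eventually_gt_at_top[of 0]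
    proof (eventually_elim)
      case (elim n)
      have rn: "r ^ n = (s ^ (k + 1)) ^ n * (s ^ n) ^ (k + 1)"
      proof -
        have "r ^ n = s ^ (m * n)" unfolding sm[symmetric] by (simp add: power_mult)
        moreover have "(s ^ (k + 1)) ^ n * (s ^ n) ^ (k + 1) = s ^ ((k + 1) * n + n * (k + 1))"
          by (simp only: power_mult power_add)
        moreover have "(k + 1) * n + n * (k + 1) = m * n" unfolding m_def by (simp add: algebra_simps)
        ultimately show ?thesis by simp
      qed
      have "real n ^ k \<le> real n ^ (k + 1)" using elim(2) by (intro power_increasing) auto
      then have "real n ^ k * r ^ n \<le> real n ^ (k + 1) * r ^ n"
        using r by (intro mult_right_mono) auto
      also have "\<dots> = (real n * s ^ n) ^ (k + 1) * (s ^ (k + 1)) ^ n"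
        unfolding rn by (simp add: power_mult_distrib)
      also have "\<dots> \<le> 1 ^ (k + 1) * (s ^ (k + 1)) ^ n"
        using elim(1) s by (intro mult_right_mono power_mono) auto
      finally show ?case using r by simp
    qed
  qed
qed


lemma G_meas:
  assumes "prob_space M" "prob_space.indep_vars M (\<lambda>_. count_space UNIV) G UNIV"
  shows "G n \<in> measurable M (count_space UNIV)"
  using assms(2) unfolding prob_space.indep_vars_def2[OF assms(1)] by auto

lemma prob_transfer:
  assumes meas: "G n \<in> measurable M (count_space UNIV)"
    and dist: "distr M (count_space UNIV) (G n) = measure_pmf (gnp n p)"
  shows "measure M {\<omega> \<in> space M. P (G n \<omega>)} = measure_pmf.prob (bern n p) {b. P (Eb n b)}"
proof -
  have "measure M {\<omega> \<in> space M. P (G n \<omega>)} = measure M (G n -` {E. P E} \<inter> space M)"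
    by (rule arg_cong[where f = "measure M"]) auto
  also have "\<dots> = measure (distr M (count_space UNIV) (G n)) {E. P E}"
    by (rule measure_distr[symmetric, OF meas]) simp
  also have "\<dots> = measure_pmf.prob (gnp n p) {E. P E}" by (simp add: dist)
  also have "\<dots> = measure_pmf.prob (bern n p) {b. P (Eb n b)}" by (simp add: gnp_eq)
  finally show ?thesis .
qed

lemma sets_transfer:
  assumes meas: "G n \<in> measurable M (count_space UNIV)"
  shows "{\<omega> \<in> space M. P (G n \<omega>)} \<in> sets M"
proof -
  have "G n -` {E. P E} \<inter> space M \<in> sets M" by (rule measurable_sets[OF meas]) simp
  moreover have "G n -` {E. P E} \<inter> space M = {\<omega> \<in> space M. P (G n \<omega>)}" by auto
  ultimately show ?thesis by simp
qed

lemma AE_loopless: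
  assumes "prob_space M" "prob_space.indep_vars M (\<lambda>_. count_space UNIV) G UNIV"
    and dist: "\<And>n. distr M (count_space UNIV) (G n) = measure_pmf (gnp n p)"
  shows "AE \<omega> in M. \<forall>n. loopless (G n \<omega>)"
proof -
  have "AE \<omega> in M. loopless (G n \<omega>)" for n
  proof (rule AE_distrD[OF G_meas[OF assms(1,2)]])
    show "AE E in distr M (count_space UNIV) (G n). loopless E"
      unfolding dist gnp_eq
      by (rule AE_pmfI) (auto intro: loopless_sub[OF Eb_sub])
  qed
  then show ?thesis by (simp add: AE_all_countable)
qed

lemma bc_apply:
  assumes ps: "prob_space M" and meas: "\<And>n. G n \<in> measurable M (count_space UNIV)"
    and sum: "summable (\<lambda>n. measure M {\<omega> \<in> space M. \<not> Q n (G n \<omega>)})"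
  shows "AE \<omega> in M. eventually (\<lambda>n. Q n (G n \<omega>)) sequentially"
proof -
  interpret prob_space M by (rule ps)
  let ?A = "\<lambda>n. {\<omega> \<in> space M. \<not> Q n (G n \<omega>)}"
  have "AE \<omega> in M. eventually (\<lambda>n. \<omega> \<in> space M - ?A n) sequentially"
  proof (rule borel_cantelli_AE1)
    show "?A n \<in> sets M" for n by (rule sets_transfer[OF meas])
    show "emeasure M (?A n) < \<infinity>" for n by (simp add: emeasure_eq_measure)
  qed (rule sum)
  moreover have "\<omega> \<in> space M \<Longrightarrow> \<omega> \<in> space M - ?A n \<Longrightarrow> Q n (G n \<omega>)" for \<omega> n by auto
  ultimately show ?thesis
    by (auto elim!: eventually_mono simp: AE_iff_measurable[symmetric] eventually_ae_filter)
qed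

lemma aux_eq:
  fixes a b w y z :: real
  assumes "z = w * y" "y > 0"
  shows "a * b * w = (b / y) * (a * z)"
  using assms by (simp add: field_simps)

lemma AE_ext:
  assumes ps: "prob_space M" and p: "0 < p" "p < 1"
    and ind: "prob_space.indep_vars M (\<lambda>_. count_space UNIV) G UNIV"
    and dist: "\<And>n. distr M (count_space UNIV) (G n) = measure_pmf (gnp n p)"
  shows "AE \<omega> in M. eventually (\<lambda>n. ext_fun (Suc k) n (G n \<omega>)) sequentially"
proof (rule bc_apply[OF ps G_meas[OF ps ind]])
  let ?K = "Suc k"
  let ?c = "min p (1 - p)"
  let ?r = "1 - ?c ^ ?K"
  have c: "0 < ?c" "?c < 1" using p by auto
  have cK1: "?c ^ ?K < 1 ^ ?K" by (rule power_strict_mono) (use c in auto)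
  have cK: "0 < ?c ^ ?K" "?c ^ ?K < 1" using c cK1 by auto
  have r: "0 < ?r" "?r < 1" using cK by auto
  let ?C = "2 ^ ?K / ?r ^ ?K"
  have sg: "summable (\<lambda>n. ?C * (real n ^ ?K * ?r ^ n))"
    by (rule summable_mult[OF summable_poly_geom]) (use r in auto)
  show "summable (\<lambda>n. measure M {\<omega> \<in> space M. \<not> ext_fun ?K n (G n \<omega>)})"
  proof (rule summable_comparison_test'[OF sg])
    fix n :: nat assume n: "n \<ge> ?K"
    have "measure M {\<omega> \<in> space M. \<not> ext_fun ?K n (G n \<omega>)} = measure_pmf.prob (bern n p) {b. \<not> ext_fun ?K n (Eb n b)}"
      by (rule prob_transfer[OF G_meas[OF ps ind] dist])
    also have "\<dots> \<le> real n ^ ?K * 2 ^ ?K * ?r ^ (n - ?K)" by (rule ext_fail_bound[OF p])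
    also have "\<dots> = ?C * (real n ^ ?K * ?r ^ n)"
    proof -
      have "?r ^ n = ?r ^ (n - ?K) * ?r ^ ?K" by (subst power_add[symmetric]) (use n in simp)
      moreover have "?r ^ ?K > 0" using r by simp
      ultimately show ?thesis by (rule aux_eq)
    qed
    finally show "norm (measure M {\<omega> \<in> space M. \<not> ext_fun ?K n (G n \<omega>)}) \<le> ?C * (real n ^ ?K * ?r ^ n)"
      by simp
  qed
qed

lemma AE_conc:
  assumes ps: "prob_space M" and p: "0 < p" "p < 1"
    and ind: "prob_space.indep_vars M (\<lambda>_. count_space UNIV) G UNIV"
    and dist: "\<And>n. distr M (count_space UNIV) (G n) = measure_pmf (gnp n p)"
    and eps: "\<epsilon> > 0"
  shows "AE \<omega> in M. eventually (\<lambda>n. \<bar>Pc c q n (G n \<omega>) - real (card (Inj q n)) * piq p c q / real n ^ q\<bar> < \<epsilon>) sequentially"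
proof (rule bc_apply[OF ps G_meas[OF ps ind]])
  let ?mu = "\<lambda>n. real (card (Inj q n)) * piq p c q / real n ^ q"
  let ?C = "real q ^ 4 / \<epsilon>\<^sup>2"
  have sg: "summable (\<lambda>n. ?C * inverse (real n ^ 2))"
    by (rule summable_mult[OF inverse_power_summable]) simp
  show "summable (\<lambda>n. measure M {\<omega> \<in> space M. \<not> \<bar>Pc c q n (G n \<omega>) - ?mu n\<bar> < \<epsilon>})"
  proof (rule summable_comparison_test'[OF sg])
    fix n :: nat assume n: "n \<ge> 1"
    have "measure M {\<omega> \<in> space M. \<not> \<bar>Pc c q n (G n \<omega>) - ?mu n\<bar> < \<epsilon>} =
          measure_pmf.prob (bern n p) {b. \<not> \<bar>Pc c q n (Eb n b) - ?mu n\<bar> < \<epsilon>}"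
      by (rule prob_transfer[OF G_meas[OF ps ind] dist])
    also have "{b. \<not> \<bar>Pc c q n (Eb n b) - ?mu n\<bar> < \<epsilon>} = {b. \<epsilon> \<le> \<bar>Pc c q n (Eb n b) - ?mu n\<bar>}"
      by auto
    also have "measure_pmf.prob (bern n p) \<dots> \<le> real q ^ 4 / (\<epsilon>\<^sup>2 * (real n)\<^sup>2)"
      by (rule conc_bound[OF p eps]) (use n in simp)
    also have "\<dots> = ?C * inverse (real n ^ 2)" by (simp add: field_simps)
    finally show "norm (measure M {\<omega> \<in> space M. \<not> \<bar>Pc c q n (G n \<omega>) - ?mu n\<bar> < \<epsilon>}) \<le> ?C * inverse (real n ^ 2)"
      by simp
  qed
qed

lemma AE_Pc_conv:
  assumes ps: "prob_space M" and p: "0 < p" "p < 1"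
    and ind: "prob_space.indep_vars M (\<lambda>_. count_space UNIV) G UNIV"
    and dist: "\<And>n. distr M (count_space UNIV) (G n) = measure_pmf (gnp n p)"
  shows "AE \<omega> in M. convergent (\<lambda>n. Pc c q n (G n \<omega>))"
proof -
  let ?mu = "\<lambda>n. real (card (Inj q n)) * piq p c q / real n ^ q"
  have "AE \<omega> in M. \<forall>m::nat. eventually (\<lambda>n. \<bar>Pc c q n (G n \<omega>) - ?mu n\<bar> < inverse (real (Suc m))) sequentially"
    unfolding AE_all_countable by (intro allI AE_conc[OF ps p ind dist]) simp
  then show ?thesis
  proof (rule AE_mp[OF _ AE_I2], intro impI)
    fix \<omega> assume H: "\<forall>m::nat. eventually (\<lambda>n. \<bar>Pc c q n (G n \<omega>) - ?mu n\<bar> < inverse (real (Suc m))) sequentially"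
    have "(\<lambda>n. Pc c q n (G n \<omega>) - ?mu n) \<longlonglongrightarrow> 0"
    proof (rule tendstoI)
      fix e :: real assume e: "e > 0"
      obtain m where m: "inverse (real (Suc m)) < e" using reals_Archimedean[OF e] by blast
      show "eventually (\<lambda>n. dist (Pc c q n (G n \<omega>) - ?mu n) 0 < e) sequentially"
        using H[rule_format, of m] by (rule eventually_mono) (use m in auto)
    qed
    moreover have "?mu \<longlonglongrightarrow> 1 * piq p c q"
    proof -
      have "(\<lambda>n. real (card (Inj q n)) / real n ^ q * piq p c q) \<longlonglongrightarrow> 1 * piq p c q"
        by (intro tendsto_mult card_Inj_lim tendsto_const)
      then show ?thesis by (simp add: field_simps)
    qed
    ultimately have "(\<lambda>n. (Pc c q n (G n \<omega>) - ?mu n) + ?mu n) \<longlonglongrightarrow> 0 + 1 * piq p c q"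
      by (rule tendsto_add)
    then show "convergent (\<lambda>n. Pc c q n (G n \<omega>))" unfolding convergent_def by auto
  qed
qed

theorem theorem5p14:
  fixes M :: "'w measure" and G :: "nat \<Rightarrow> 'w \<Rightarrow> nat set set" and p :: real
  assumes "prob_space M"
    and "0 < p" and "p < 1"
    and "prob_space.indep_vars M (\<lambda>_. count_space UNIV) G UNIV"
    and "\<And>n. distr M (count_space UNIV) (G n) = measure_pmf (gnp n p)"
  shows "AE \<omega> in M. FO_convergent (\<lambda>n. G n \<omega>)"
proof -
  note ps = assms(1) and p = assms(2,3) and ind = assms(4) and dist = assms(5)
  have A1: "AE \<omega> in M. \<forall>n. loopless (G n \<omega>)" by (rule AE_loopless[OF ps ind dist])
  have A2: "AE \<omega> in M. \<forall>k. eventually (\<lambda>n. ext_fun (Suc k) n (G n \<omega>)) sequentially"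
    unfolding AE_all_countable by (intro allI AE_ext[OF ps p ind dist])
  have A3: "AE \<omega> in M. \<forall>q. \<forall>\<tau>\<in>Tys q. convergent (\<lambda>n. Pc (\<lambda>i j. snd (\<tau> (i, j))) q n (G n \<omega>))"
    unfolding AE_all_countable
  proof (intro allI AE_finite_allI[OF finite_Tys])
    fix q and \<tau> :: "nat \<times> nat \<Rightarrow> bool \<times> bool"
    show "AE \<omega> in M. convergent (\<lambda>n. Pc (\<lambda>i j. snd (\<tau> (i, j))) q n (G n \<omega>))"
      by (rule AE_Pc_conv[OF ps p ind dist])
  qed
  show ?thesis
    using A1 A2 A3
  proof eventually_elim
    case (elim \<omega>)
    show ?case
    proof (rule FO_convergent_crit)
      show "loopless (G n \<omega>)" for n using elim(1) by simp
      show "eventually (\<lambda>n. ext_set k n (G n \<omega>)) sequentially" for k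
        using elim(2)[rule_format, of k] eventually_gt_at_top[of 0]
      proof eventually_elim
        case (elim n)
        have "ext_set (Suc k) n (G n \<omega>)" by (rule ext_fun_set) (use elim in auto)
        then show ?case by (rule ext_set_mono[rotated]) simp
      qed
      show "convergent (\<lambda>n. D \<tau> q n (G n \<omega>))" if "\<tau> \<in> Tys q" for q \<tau>
        by (rule D_convergent[OF that]) (use elim that in auto)
    qed
  qed
qed


end
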